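(* Let $n\ge3$ and let $$\pi_n=\begin{pmatrix}0&2&3&\cdots&n-1&1&n\\ n&n-1&\cdots&3&2&1&0\end{pmatrix}$$ be the labeled permutation on the alphabet $\{0,1,\dots,n\}$. Then the reduced Rauzy diagram $\mathcal D_r(\pi_n)$ has exactly $2^{n-1}-1+n$ vertices.
   Context: A labeled permutation on an alphabet $\mathcal A$ with $d$ letters is a pair $(\pi_t,\pi_b)$ of bijections $\mathcal A\to\{1,\dots,d\}$, written as a two-row array listing $\pi_t^{-1}(1),\dots,\pi_t^{-1}(d)$ on top and $\pi_b^{-1}(1),\dots,\pi_b^{-1}(d)$ on the bottom. The Rauzy move $\mathcal R_t$ keeps the top row and in the bottom row moves the last letter to the position immediately right of the letter $\pi_t^{-1}(d)$; $\mathcal R_b$ keeps the bottom row and in the top row moves the last letter to immediately right of $\pi_b^{-1}(d)$. Two labeled permutations are identified as reduced permutations if $\pi_b\circ\pi_t^{-1}=\pi_b'\circ\pi_t'^{-1}$. The reduced Rauzy diagram $\mathcal D_r(\pi)$ is the directed graph whose vertices are the reduced permutations obtainable from (the class of) $\pi$ by iterated Rauzy moves, with edges given by the two moves. *)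

theory Defs
  imports Main
begin

text \<open>A labeled permutation on an alphabet of letters of type 'a is represented by its
two rows (top row, bottom row), each a list enumerating the alphabet without repetition:
the top row is [pi_t^-1(1), ..., pi_t^-1(d)], the bottom row [pi_b^-1(1), ..., pi_b^-1(d)].\<close>

type_synonym 'a lperm = "'a list \<times> 'a list"

definition is_lperm :: "'a set \<Rightarrow> 'a lperm \<Rightarrow> bool" where
  "is_lperm A p \<longleftrightarrow> distinct (fst p) \<and> distinct (snd p) \<and> set (fst p) = A \<and> set (snd p) = A"

definition pos :: "'a \<Rightarrow> 'a list \<Rightarrow> nat" where
  "pos a xs = length (takeWhile (\<lambda>z. z \<noteq> a) xs)"

definition move_last_after :: "'a \<Rightarrow> 'a list \<Rightarrow> 'a list" where
  "move_last_after y r =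
     (let x = last r; r' = butlast r in
      if x = y then r else concat (map (\<lambda>z. if z = y then [z, x] else [z]) r'))"

definition rauzy_t :: "'a lperm \<Rightarrow> 'a lperm" where
  "rauzy_t p = (fst p, move_last_after (last (fst p)) (snd p))"

definition rauzy_b :: "'a lperm \<Rightarrow> 'a lperm" where
  "rauzy_b p = (move_last_after (last (snd p)) (fst p), snd p)"

definition rauzy_step :: "'a lperm \<Rightarrow> 'a lperm \<Rightarrow> bool" where
  "rauzy_step p q \<longleftrightarrow> q = rauzy_t p \<or> q = rauzy_b p"

text \<open>The reduced permutation pi_b o pi_t^-1 (written with 0-based positions):
the i-th entry is the bottom position of the i-th letter of the top row.
Two labeled permutations are identified iff these lists coincide.\<close>
definition reduced :: "'a lperm \<Rightarrow> nat list" where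
  "reduced p = map (\<lambda>a. pos a (snd p)) (fst p)"

text \<open>Vertices of the reduced Rauzy diagram: reduced classes of all labeled permutations
obtained from p by iterated Rauzy moves.  (Rauzy moves commute with relabeling, so this
equals the set of reduced permutations reachable from the class of p.)\<close>
definition reduced_rauzy_vertices :: "'a lperm \<Rightarrow> nat list set" where
  "reduced_rauzy_vertices p = reduced ` {q. rauzy_step\<^sup>*\<^sup>* p q}"

definition pi_n :: "nat \<Rightarrow> nat lperm" where
  "pi_n n = (0 # [2..<n] @ [1, n], rev [0..<n+1])"

end

theory Submission
  imports Defs
begin


lemma pos_Cons: "pos a (x # xs) = (if x = a then 0 else Suc (pos a xs))"
  by (simp add: pos_def)

lemma pos_append: "pos a (xs @ ys) = (if a \<in> set xs then pos a xs else length xs + pos a ys)"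
  by (induction xs) (auto simp: pos_Cons pos_def)

lemma pos_nth: "distinct xs \<Longrightarrow> i < length xs \<Longrightarrow> pos (xs ! i) xs = i"
proof (induction xs arbitrary: i)
  case Nil then show ?case by simp
next
  case (Cons x xs) then show ?case
    by (cases i) (auto simp: pos_Cons nth_mem)
qed

lemma pos_lt: "a \<in> set xs \<Longrightarrow> pos a xs < length xs"
  by (induction xs) (auto simp: pos_Cons)

lemma pos_inj: "a \<in> set xs \<Longrightarrow> b \<in> set xs \<Longrightarrow> pos a xs = pos b xs \<Longrightarrow> a = b"
  by (induction xs) (auto simp: pos_Cons split: if_splits)

lemma mla_split:
  assumes "y \<notin> set B1" "y \<notin> set B2" "y \<noteq> z"
  shows "move_last_after y (B1 @ y # B2 @ [z]) = B1 @ y # z # B2"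
proof -
  have "butlast (B1 @ y # B2 @ [z]) = B1 @ y # B2"
    by (simp add: butlast_append)
  moreover have c: "y \<notin> set L \<Longrightarrow> concat (map (\<lambda>w. if w = y then [w, z] else [w]) L) = L" for L
    by (induction L) auto
  ultimately show ?thesis using assms
    by (simp add: move_last_after_def Let_def c)
qed


lemma mla_last: "xs \<noteq> [] \<Longrightarrow> move_last_after (last xs) xs = xs"
  by (simp add: move_last_after_def)

lemma mla_mem_cases:
  assumes "y \<in> set xs"
  obtains "y = last xs" | B1 B2 where "xs = B1 @ y # B2 @ [last xs]" "y \<noteq> last xs"
proof (cases "y = last xs")
  case True then show ?thesis using that by blast
next
  case False
  have ne: "xs \<noteq> []" using assms by auto
  have "y \<in> set (butlast xs)" using assms False ne
    by (metis append_butlast_last_id in_set_butlast_appendI rotate1.simps(2) set_ConsD set_rotate1)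
  then obtain B1 B2 where "butlast xs = B1 @ y # B2" by (meson split_list)
  then have "xs = B1 @ y # B2 @ [last xs]" using ne by (metis append.assoc append_Cons append_butlast_last_id)
  then show ?thesis using that False by blast
qed

lemma mla_perm:
  assumes "distinct xs" "y \<in> set xs"
  shows "distinct (move_last_after y xs) \<and> set (move_last_after y xs) = set xs \<and> length (move_last_after y xs) = length xs"
  using assms(2)
proof (cases rule: mla_mem_cases)
  case 1
  have "xs \<noteq> []" using assms by auto
  then show ?thesis using 1 assms by (simp add: mla_last)
next
  case (2 B1 B2)
  have d: "distinct (B1 @ y # B2 @ [last xs])" using assms(1) 2 by simp
  have "y \<notin> set B1" "y \<notin> set B2" using d by auto
  then have "move_last_after y xs = B1 @ y # last xs # B2"
    using 2 mla_split by metis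
  moreover have g: "distinct (B1 @ y # B2 @ [z]) \<Longrightarrow> distinct (B1 @ y # z # B2) \<and>
     set (B1 @ y # z # B2) = set (B1 @ y # B2 @ [z]) \<and> length (B1 @ y # z # B2) = length (B1 @ y # B2 @ [z])" for z
    by auto
  ultimately show ?thesis using d g[of "last xs"] 2(1) by metis
qed

lemma mla_map:
  assumes "inj_on f (insert y (set xs))"
  shows "map f (move_last_after y xs) = move_last_after (f y) (map f xs)"
proof (cases "xs = []")
  case True then show ?thesis by (simp add: move_last_after_def Let_def)
next
  case False
  have l: "last (map f xs) = f (last xs)" using False by (simp add: last_map)
  have eq: "(f (last xs) = f y) = (last xs = y)"
    using assms False by (metis inj_on_eq_iff insertI1 insertI2 last_in_set)
  have c: "map f (concat (map (\<lambda>w. if w = y then [w, last xs] else [w]) L)) =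
        concat (map (\<lambda>w. if w = f y then [w, f (last xs)] else [w]) (map f L))"
    if "set L \<subseteq> set xs" for L
    using that proof (induction L)
    case Nil then show ?case by simp
  next
    case (Cons a L)
    have "(f a = f y) = (a = y)" using assms Cons.prems by (metis inj_on_eq_iff insertI1 insertI2 list.set_intros(1) subsetD)
    then show ?case using Cons by auto
  qed
  have "set (butlast xs) \<subseteq> set xs" by (simp add: in_set_butlastD subsetI)
  then show ?thesis using False l eq c[of "butlast xs"]
    by (simp add: move_last_after_def Let_def map_butlast)
qed


definition mt :: "nat list \<Rightarrow> nat list" where
  "mt xs = (let m = length xs - 1; x = last xs in
     if x = m then xs else map (\<lambda>w. if w = m then x + 1 else if x < w then w + 1 else w) xs)"

definition mb :: "nat list \<Rightarrow> nat list" where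
  "mb xs = move_last_after (length xs - 1) xs"

lemma lperm_len:
  assumes "is_lperm A p" shows "length (fst p) = length (snd p)"
  using assms unfolding is_lperm_def by (metis distinct_card)

lemma pos_last: "distinct B \<Longrightarrow> B \<noteq> [] \<Longrightarrow> pos (last B) B = length B - 1"
  by (metis last_conv_nth diff_less length_greater_0_conv less_numeral_extra(1) pos_nth)

lemma red_b:
  assumes "is_lperm A p" "fst p \<noteq> []"
  shows "reduced (rauzy_b p) = mb (reduced p)"
proof -
  obtain T B where p: "p = (T, B)" by (cases p)
  have d: "distinct T" "distinct B" "set T = set B" and ne: "T \<noteq> []" "B \<noteq> []"
    using assms p unfolding is_lperm_def by auto
  have len: "length T = length B" using lperm_len[OF assms(1)] p by simp
  have inj: "inj_on (\<lambda>a. pos a B) (insert (last B) (set T))"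
    using d ne by (intro inj_onI) (auto intro: pos_inj)
  have "reduced (rauzy_b p) = map (\<lambda>a. pos a B) (move_last_after (last B) T)"
    by (simp add: p rauzy_b_def reduced_def)
  also have "\<dots> = move_last_after (pos (last B) B) (map (\<lambda>a. pos a B) T)"
    by (rule mla_map[OF inj])
  also have "\<dots> = mb (reduced p)"
    using d ne len by (simp add: mb_def reduced_def p pos_last)
  finally show ?thesis .
qed

lemma red_t:
  assumes "is_lperm A p" "fst p \<noteq> []"
  shows "reduced (rauzy_t p) = mt (reduced p)"
proof -
  obtain T B where p: "p = (T, B)" by (cases p)
  have d: "distinct T" "distinct B" "set T = set B" and ne: "T \<noteq> []" "B \<noteq> []"
    using assms p unfolding is_lperm_def by auto
  have len: "length T = length B" using lperm_len[OF assms(1)] p by simp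
  have lx: "last (reduced p) = pos (last T) B"
    using ne by (simp add: reduced_def p last_map)
  have lr: "length (reduced p) = length B" using len by (simp add: reduced_def p)
  have yin: "last T \<in> set B" using d(3) ne(1) last_in_set by metis
  show ?thesis
  using yin proof (cases rule: mla_mem_cases)
    case 1
    then show ?thesis using d ne lx lr
      by (simp add: rauzy_t_def reduced_def p mt_def mla_last pos_last Let_def)
  next
    case (2 B1 B2)
    define y where "y = last T"
    define z where "z = last B"
    have Bs: "B = B1 @ y # B2 @ [z]" and yz: "y \<noteq> z" using 2 y_def z_def by auto
    have dB: "distinct (B1 @ y # B2 @ [z])" using d Bs by simp
    have B': "move_last_after y B = B1 @ y # z # B2"
      using Bs yz dB mla_split[of y B1 B2 z] by auto
    have x: "pos y B = length B1" using dB Bs by (simp add: pos_append pos_Cons)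
    have m: "length B - 1 = length B1 + length B2 + 1" using Bs by simp
    have key: "pos a (B1 @ y # z # B2) =
      (if pos a B = length B - 1 then pos y B + 1 else if pos y B < pos a B then pos a B + 1 else pos a B)"
      if "a \<in> set B" for a
    proof -
      have "a \<in> set B1 \<or> a = y \<or> a \<in> set B2 \<or> a = z" using that Bs by auto
      then show ?thesis
      proof (elim disjE)
        assume a: "a \<in> set B1"
        then have "a \<noteq> y" "a \<notin> set B2" "a \<noteq> z" using dB by auto
        moreover have "pos a B1 < length B1" by (rule pos_lt[OF a])
        ultimately show ?thesis using a x m Bs by (simp add: pos_append pos_Cons)
      next
        assume a: "a = y"
        then show ?thesis using x m Bs dB by (simp add: pos_append pos_Cons)
      next
        assume a: "a \<in> set B2"
        then have "a \<noteq> y" "a \<notin> set B1" "a \<noteq> z" using dB by auto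
        moreover have "pos a B2 < length B2" by (rule pos_lt[OF a])
        ultimately show ?thesis using a x m Bs by (simp add: pos_append pos_Cons)
      next
        assume a: "a = z"
        then have "z \<notin> set B1" "z \<notin> set B2" "z \<noteq> y" using dB by auto
        then show ?thesis using a x m Bs by (simp add: pos_append pos_Cons)
      qed
    qed
    have "reduced (rauzy_t p) = map (\<lambda>a. pos a (B1 @ y # z # B2)) T"
      using B' by (simp add: rauzy_t_def reduced_def p y_def)
    also have "\<dots> = map (\<lambda>a. (if pos a B = length B - 1 then pos y B + 1 else if pos y B < pos a B then pos a B + 1 else pos a B)) T"
      using key d by (intro map_cong) auto
    also have "\<dots> = mt (reduced p)"
    proof -
      have "pos y B \<noteq> length B - 1" using x m by simp
      then show ?thesis using lx lr
        by (simp add: mt_def Let_def reduced_def p y_def comp_def)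
    qed
    finally show ?thesis .
  qed
qed


definition mstep :: "nat list \<Rightarrow> nat list \<Rightarrow> bool" where
  "mstep x y \<longleftrightarrow> y = mt x \<or> y = mb x"

lemma lperm_t:
  assumes "is_lperm A p" "fst p \<noteq> []"
  shows "is_lperm A (rauzy_t p) \<and> fst (rauzy_t p) \<noteq> []"
proof -
  obtain T B where p: "p = (T, B)" by (cases p)
  have d: "distinct T" "distinct B" "set T = A" "set B = A" and ne: "T \<noteq> []"
    using assms p unfolding is_lperm_def by auto
  have "last T \<in> set B" using d(3,4) ne last_in_set by metis
  then show ?thesis using mla_perm[OF d(2)] d ne by (simp add: is_lperm_def rauzy_t_def p)
qed

lemma lperm_b:
  assumes "is_lperm A p" "fst p \<noteq> []"
  shows "is_lperm A (rauzy_b p) \<and> fst (rauzy_b p) \<noteq> []"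
proof -
  obtain T B where p: "p = (T, B)" by (cases p)
  have d: "distinct T" "distinct B" "set T = A" "set B = A" and ne: "T \<noteq> []"
    using assms p unfolding is_lperm_def by auto
  have "B \<noteq> []" using d ne by auto
  then have "last B \<in> set T" using d by (metis last_in_set)
  then have "distinct (move_last_after (last B) T) \<and> set (move_last_after (last B) T) = set T \<and> length (move_last_after (last B) T) = length T"
    using mla_perm[OF d(1)] by blast
  then show ?thesis using d ne by (auto simp: is_lperm_def rauzy_b_def p)
qed

lemma vertices_eq:
  assumes "is_lperm A p" "fst p \<noteq> []"
  shows "reduced_rauzy_vertices p = {\<tau>. mstep\<^sup>*\<^sup>* (reduced p) \<tau>}"
proof (intro set_eqI iffI)
  fix \<tau> assume "\<tau> \<in> reduced_rauzy_vertices p"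
  then obtain q where q: "rauzy_step\<^sup>*\<^sup>* p q" "\<tau> = reduced q"
    by (auto simp: reduced_rauzy_vertices_def)
  have "is_lperm A q \<and> fst q \<noteq> [] \<and> mstep\<^sup>*\<^sup>* (reduced p) (reduced q)"
    using q(1) proof (induction rule: rtranclp_induct)
    case base then show ?case using assms by simp
  next
    case (step q r)
    then have I: "is_lperm A q" "fst q \<noteq> []" "mstep\<^sup>*\<^sup>* (reduced p) (reduced q)" by auto
    from step(2) have "r = rauzy_t q \<or> r = rauzy_b q" by (simp add: rauzy_step_def)
    then show ?case
    proof
      assume r: "r = rauzy_t q"
      have "mstep (reduced q) (reduced r)" using red_t[OF I(1,2)] r by (simp add: mstep_def)
      then show ?thesis using lperm_t[OF I(1,2)] r I(3) by (simp add: rtranclp.rtrancl_into_rtrancl)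
    next
      assume r: "r = rauzy_b q"
      have "mstep (reduced q) (reduced r)" using red_b[OF I(1,2)] r by (simp add: mstep_def)
      then show ?thesis using lperm_b[OF I(1,2)] r I(3) by (simp add: rtranclp.rtrancl_into_rtrancl)
    qed
  qed
  then show "\<tau> \<in> {\<tau>. mstep\<^sup>*\<^sup>* (reduced p) \<tau>}" using q by simp
next
  fix \<tau> assume "\<tau> \<in> {\<tau>. mstep\<^sup>*\<^sup>* (reduced p) \<tau>}"
  then have "mstep\<^sup>*\<^sup>* (reduced p) \<tau>" by simp
  then have "\<exists>q. rauzy_step\<^sup>*\<^sup>* p q \<and> is_lperm A q \<and> fst q \<noteq> [] \<and> reduced q = \<tau>"
  proof (induction rule: rtranclp_induct)
    case base then show ?case using assms by (intro exI[of _ p]) auto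
  next
    case (step x y)
    then obtain q where q: "rauzy_step\<^sup>*\<^sup>* p q" "is_lperm A q" "fst q \<noteq> []" "reduced q = x" by auto
    from step(2) have "y = mt x \<or> y = mb x" by (simp add: mstep_def)
    then show ?case
    proof
      assume y: "y = mt x"
      have "rauzy_step q (rauzy_t q)" by (simp add: rauzy_step_def)
      then show ?thesis using q y red_t[OF q(2,3)] lperm_t[OF q(2,3)]
        by (metis rtranclp.rtrancl_into_rtrancl)
    next
      assume y: "y = mb x"
      have "rauzy_step q (rauzy_b q)" by (simp add: rauzy_step_def)
      then show ?thesis using q y red_b[OF q(2,3)] lperm_b[OF q(2,3)]
        by (metis rtranclp.rtrancl_into_rtrancl)
    qed
  qed
  then show "\<tau> \<in> reduced_rauzy_vertices p" by (auto simp: reduced_rauzy_vertices_def)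
qed


definition symk :: "nat \<Rightarrow> nat list" where "symk k = rev [0..<k]"
definition EE :: "nat \<Rightarrow> nat list \<Rightarrow> nat list" where
  "EE a s = (hd s + a) # rev [0..<a] @ map (\<lambda>w. w + a) (tl s)"
definition FF :: "nat \<Rightarrow> nat list \<Rightarrow> nat list" where
  "FF a s = rev [1..<a+1] @ map (\<lambda>w. if w = 0 then 0 else w + a) s"
definition insm :: "nat \<Rightarrow> nat list \<Rightarrow> nat list" where
  "insm h t = h # map (\<lambda>w. if h \<le> w then w + 1 else w) t"
definition ww :: "nat \<Rightarrow> nat list" where "ww m = (m - 1) # 0 # rev [1..<m-1]"
definition zz :: "nat \<Rightarrow> nat list" where "zz m = 0 # rev [1..<m-1] @ [m - 1]"
definition rotr :: "nat list \<Rightarrow> nat list" where "rotr u = last u # butlast u"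
definition isperm :: "nat \<Rightarrow> nat list \<Rightarrow> bool" where
  "isperm k xs \<longleftrightarrow> distinct xs \<and> set xs = {0..<k}"

definition rho :: "nat \<Rightarrow> nat \<Rightarrow> nat \<Rightarrow> nat" where
  "rho m x w = (if w = m then x + 1 else if x < w then w + 1 else w)"

lemma mt_alt: "mt xs = (if last xs = length xs - 1 then xs else map (rho (length xs - 1) (last xs)) xs)"
  by (simp add: mt_def Let_def rho_def[abs_def])

lemma isperm_len: "isperm k xs \<Longrightarrow> length xs = k"
  unfolding isperm_def by (metis card_atLeastLessThan diff_zero distinct_card)

lemma length_mt[simp]: "length (mt xs) = length xs"
  by (simp add: mt_alt)

lemma isperm_mt: assumes "isperm k xs" shows "isperm k (mt xs)"
proof (cases "xs = [] \<or> last xs = length xs - 1")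
  case True then show ?thesis using assms by (auto simp: mt_alt)
next
  case False
  have len: "length xs = k" using isperm_len[OF assms] .
  have ne: "xs \<noteq> []" using False by auto
  have xk: "last xs < k" using assms ne unfolding isperm_def by (metis atLeastLessThan_iff last_in_set)
  let ?r = "rho (k - 1) (last xs)"
  have inj: "inj_on ?r {0..<k}" using xk by (intro inj_onI) (simp add: rho_def split: if_splits)
  have sub: "?r ` {0..<k} \<subseteq> {0..<k}" using xk False len by (auto simp: rho_def)
  have im: "?r ` {0..<k} = {0..<k}" using endo_inj_surj[OF _ sub inj] by simp
  show ?thesis using assms False ne len inj im unfolding isperm_def
    by (simp add: mt_alt distinct_map inj_on_subset)
qed

lemma isperm_mb: assumes "isperm k xs" "k \<ge> 1" shows "isperm k (mb xs)" "length (mb xs) = k"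
proof -
  have len: "length xs = k" using isperm_len[OF assms(1)] .
  have "length xs - 1 \<in> set xs" using assms len unfolding isperm_def by auto
  then have "distinct (mb xs) \<and> set (mb xs) = set xs \<and> length (mb xs) = length xs"
    using mla_perm[of xs "length xs - 1"] assms(1) unfolding isperm_def mb_def by simp
  then show "isperm k (mb xs)" "length (mb xs) = k" using assms len unfolding isperm_def by auto
qed


lemma map_plus_upt: "map (\<lambda>w. w + c) [p..<q] = [p+c..<q+c]"
  by (induction q) auto

lemma upt_split: "p \<le> r \<Longrightarrow> r \<le> q \<Longrightarrow> [p..<q] = [p..<r] @ [r..<q]"
  by (metis le_add_diff_inverse upt_add_eq_append)

lemma rev_upt_split: "p \<le> r \<Longrightarrow> r \<le> q \<Longrightarrow> rev [p..<q] = rev [r..<q] @ rev [p..<r]"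
  by (simp add: upt_split[of p r q])

lemma rev_upt_Suc: "p \<le> q \<Longrightarrow> rev [p..<Suc q] = q # rev [p..<q]"
  by simp

lemma mla_append:
  assumes "y \<notin> set A" "B \<noteq> []"
  shows "move_last_after y (A @ B) = A @ move_last_after y B"
proof -
  have c: "concat (map (\<lambda>w. if w = y then [w, z] else [w]) A) = A" for z
    using assms(1) by (induction A) auto
  show ?thesis using assms c by (simp add: move_last_after_def Let_def butlast_append)
qed

lemma symk_Suc: "symk (Suc k) = k # symk k" by (simp add: symk_def)
lemma len_symk[simp]: "length (symk k) = k" by (simp add: symk_def)
lemma hd_symk: "k \<ge> 1 \<Longrightarrow> hd (symk k) = k - 1"
  by (cases k) (auto simp: symk_Suc)
lemma tl_symk: "tl (symk k) = symk (k - 1)"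
  by (cases k) (auto simp: symk_Suc symk_def)
lemma last_symk: "k \<ge> 1 \<Longrightarrow> last (symk k) = 0"
  by (simp add: symk_def last_rev)
lemma isperm_symk: "isperm k (symk k)" by (simp add: symk_def isperm_def)
lemma map_plus_symk: "map (\<lambda>w. w + c) (symk k) = rev [c..<k+c]"
  by (simp add: symk_def rev_map[symmetric] map_plus_upt)


lemma map_Suc_plus_symk: "map (\<lambda>w. Suc (w + c)) (symk k) = rev [Suc c..<k + Suc c]"
  using map_plus_symk[of "Suc c" k] by simp

lemma len_EE: "s \<noteq> [] \<Longrightarrow> length (EE a s) = length s + a"
  by (cases s) (auto simp: EE_def)
lemma EE_0: "s \<noteq> [] \<Longrightarrow> EE 0 s = s"
  by (cases s) (auto simp: EE_def)
lemma hd_EE: "hd (EE a s) = hd s + a" by (simp add: EE_def)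
lemma last_EE: "length s \<ge> 2 \<Longrightarrow> last (EE a s) = last s + a"
  by (cases s) (auto simp: EE_def last_map)
lemma EE_nth1: "a \<ge> 1 \<Longrightarrow> EE a s ! 1 = a - 1"
  by (cases a) (auto simp: EE_def nth_append)
lemma EE_inj: "EE a s = EE a s' \<Longrightarrow> s \<noteq> [] \<Longrightarrow> s' \<noteq> [] \<Longrightarrow> s = s'"
  unfolding EE_def by (cases s; cases s') (auto simp: inj_on_def dest: map_inj_on)

lemma isperm_EE: assumes "isperm j s" "j \<ge> 1" shows "isperm (j + a) (EE a s)"
proof -
  have "s \<noteq> []" using assms isperm_len[OF assms(1)] by auto
  then obtain x r where s: "s = x # r" by (meson list.exhaust)
  have d: "distinct r" "x \<notin> set r" and st: "insert x (set r) = {0..<j}"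
    using assms s unfolding isperm_def by auto
  have im: "(\<lambda>w. w + a) ` {0..<j} = {a..<j+a}" by (simp add: image_add_atLeastLessThan')
  have st2: "set (EE a s) = {0..<a} \<union> (\<lambda>w. w + a) ` {0..<j}"
    using st[symmetric] s by (auto simp: EE_def)
  have "set (EE a s) = {0..<j+a}" unfolding st2 im by auto
  moreover have "distinct (EE a s)"
  proof -
    have "x < j" using st by auto
    moreover have "\<forall>w\<in>set r. w < j" using st by auto
    ultimately show ?thesis using d s by (auto simp: EE_def distinct_map inj_on_def)
  qed
  ultimately show ?thesis by (simp add: isperm_def)
qed

lemma rho_shift: "rho (m + a) (x + a) (w + a) = rho m x w + a"
  by (simp add: rho_def)

lemma mt_EE: assumes "length s \<ge> 2" shows "mt (EE a s) = EE a (mt s)"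
proof -
  define x where "x = hd s"
  define r where "r = tl s"
  have s: "s = x # r" using assms by (cases s) (auto simp: x_def r_def)
  have r: "r \<noteq> []" using assms by (cases s) (auto simp: r_def)
  have lE: "length (EE a s) - 1 = (length s - 1) + a" and laE: "last (EE a s) = last s + a"
    using assms len_EE[of s a] last_EE[OF assms] s by auto
  show ?thesis
  proof (cases "last s = length s - 1")
    case True then show ?thesis using lE laE by (simp add: mt_alt)
  next
    case False
    let ?m = "length s - 1" let ?x = "last s"
    have m1: "?m \<ge> 1" using assms by simp
    have blk: "map (rho (?m + a) (?x + a)) (rev [0..<a]) = rev [0..<a]"
      using m1 by (intro map_idI) (auto simp: rho_def)
    have "mt (EE a s) = map (rho (?m + a) (?x + a)) (EE a s)"
      using False lE laE by (simp add: mt_alt)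
    also have "\<dots> = EE a (map (rho ?m ?x) s)"
      using s blk by (simp add: EE_def rho_shift[symmetric] comp_def)
    also have "\<dots> = EE a (mt s)" using False by (simp add: mt_alt)
    finally show ?thesis .
  qed
qed

lemma mb_EE: assumes "length s \<ge> 2" "hd s \<noteq> length s - 1" shows "mb (EE a s) = EE a (mb s)"
proof -
  define x where "x = hd s"
  define r where "r = tl s"
  have s: "s = x # r" using assms by (cases s) (auto simp: x_def r_def)
  have r: "r \<noteq> []" using assms by (cases s) (auto simp: r_def)
  let ?m = "length s - 1"
  have lE: "length (EE a s) - 1 = ?m + a" using len_EE[of s a] s by auto
  have xm: "x \<noteq> ?m" using assms s by simp
  have "mb (EE a s) = move_last_after (?m + a) (((x + a) # rev [0..<a]) @ map (\<lambda>w. w + a) r)"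
    using lE s by (simp add: mb_def EE_def add.commute)
  also have "\<dots> = ((x + a) # rev [0..<a]) @ move_last_after (?m + a) (map (\<lambda>w. w + a) r)"
    using xm r assms(1) s by (intro mla_append) auto
  also have "move_last_after (?m + a) (map (\<lambda>w. w + a) r) = map (\<lambda>w. w + a) (move_last_after ?m r)"
    by (subst mla_map) (auto simp: inj_on_def)
  also have "mb s = x # move_last_after ?m r"
    using mla_append[of ?m "[x]" r] xm r s by (simp add: mb_def)
  ultimately show ?thesis by (simp add: EE_def)
qed

lemma mb_EE_sym: assumes "j \<ge> 2"
  shows "mb (EE a (symk j)) = (if j = 2 then symk (a + 2) else EE (a + 1) (symk (j - 1)))"
proof -
  have e1: "EE a (symk j) = (j - 1 + a) # rev [0..<a] @ rev [a..<j - 1 + a]"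
    using assms by (simp add: EE_def hd_symk tl_symk map_plus_symk)
  have s2: "rev [a..<j - 1 + a] = rev [Suc a..<j - 1 + a] @ [a]"
    using assms rev_upt_split[of a "Suc a" "j - 1 + a"] by simp
  have eq: "EE a (symk j) = [] @ (j - 1 + a) # (rev [0..<a] @ rev [Suc a..<j - 1 + a]) @ [a]"
    using e1 s2 by simp
  have L: "length (EE a (symk j)) - 1 = j - 1 + a" using assms len_EE[of "symk j" a] by (auto simp: symk_def)
  have "mb (EE a (symk j)) = move_last_after (j - 1 + a) (EE a (symk j))" by (simp only: mb_def L)
  also have "\<dots> = move_last_after (j - 1 + a) ([] @ (j - 1 + a) # (rev [0..<a] @ rev [Suc a..<j - 1 + a]) @ [a])"
    by (simp only: eq)
  also have "\<dots> = [] @ (j - 1 + a) # a # (rev [0..<a] @ rev [Suc a..<j - 1 + a])"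
    using assms by (intro mla_split) auto
  finally have "mb (EE a (symk j)) = [] @ (j - 1 + a) # a # (rev [0..<a] @ rev [Suc a..<j - 1 + a])" .
  then have r: "mb (EE a (symk j)) = (j - 1 + a) # rev [0..<Suc a] @ rev [Suc a..<j - 1 + a]" by simp
  show ?thesis
  proof (cases "j = 2")
    case True then show ?thesis using r by (simp add: symk_def)
  next
    case False
    define i where "i = j - 3"
    have j: "j = i + 3" using assms False by (simp add: i_def)
    have "EE (a + 1) (symk (j - 1)) = (j - 1 + a) # rev [0..<Suc a] @ rev [Suc a..<j - 1 + a]"
      by (simp add: j EE_def hd_symk tl_symk map_Suc_plus_symk)
    then show ?thesis using r False by simp
  qed
qed


definition gF :: "nat \<Rightarrow> nat \<Rightarrow> nat" where "gF a w = (if w = 0 then 0 else w + a)"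

lemma FF_alt: "FF a s = rev [1..<a+1] @ map (gF a) s"
  by (simp add: FF_def gF_def[abs_def])

lemma len_FF[simp]: "length (FF a u) = length u + a" by (simp add: FF_def)
lemma FF_0[simp]: "FF 0 u = u" by (simp add: FF_def map_idI)
lemma hd_FF: "a \<ge> 1 \<Longrightarrow> hd (FF a u) = a" by (cases a) (auto simp: FF_def)
lemma last_FF: "u \<noteq> [] \<Longrightarrow> last (FF a u) = (if last u = 0 then 0 else last u + a)"
  by (simp add: FF_def last_map)
lemma gF_gF: "gF a (gF b w) = gF (a + b) w" by (simp add: gF_def)
lemma gF_inj: "inj (gF a)" by (auto simp: inj_def gF_def split: if_splits)
lemma FF_inj: "FF a u = FF a u' \<Longrightarrow> u = u'"
  unfolding FF_alt using gF_inj by (simp add: inj_map_eq_map)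

lemma isperm_FF: assumes "isperm j u" "j \<ge> 1" shows "isperm (j + a) (FF a u)"
proof -
  have d: "distinct u" and st: "set u = {0..<j}" using assms unfolding isperm_def by auto
  have im: "gF a ` {0..<j} = insert 0 {a+1..<j+a}"
  proof
    show "gF a ` {0..<j} \<subseteq> insert 0 {a+1..<j+a}" by (auto simp: gF_def)
    show "insert 0 {a+1..<j+a} \<subseteq> gF a ` {0..<j}"
    proof
      fix v assume v: "v \<in> insert 0 {a+1..<j+a}"
      show "v \<in> gF a ` {0..<j}"
      proof (cases "v = 0")
        case True then show ?thesis using assms(2) by (auto simp: gF_def image_iff intro: bexI[of _ 0])
      next
        case False then have "gF a (v - a) = v" "v - a \<in> {0..<j}" using v by (auto simp: gF_def)
        then show ?thesis by (metis imageI)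
      qed
    qed
  qed
  have "set (FF a u) = {0..<j+a}" unfolding FF_alt using st im by auto
  moreover have "distinct (FF a u)"
  proof -
    have d1: "distinct (map (gF a) u)" using d gF_inj[of a] by (simp add: distinct_map inj_on_subset[of _ UNIV])
    have d2: "\<forall>v\<in>set (map (gF a) u). v \<notin> set (rev [1..<a+1])" by (auto simp: gF_def)
    show ?thesis unfolding FF_alt using d1 d2 by (auto simp: distinct_append)
  qed
  ultimately show ?thesis by (simp add: isperm_def)
qed

lemma mb_FF: assumes "length u \<ge> 2" shows "mb (FF a u) = FF a (mb u)"
proof -
  let ?m = "length u - 1"
  have L: "length (FF a u) - 1 = ?m + a" using assms by simp
  have "mb (FF a u) = move_last_after (?m + a) (rev [1..<a+1] @ map (gF a) u)"
    unfolding mb_def L by (simp add: FF_alt)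
  also have "\<dots> = rev [1..<a+1] @ move_last_after (?m + a) (map (gF a) u)"
    using assms by (intro mla_append) auto
  also have "?m + a = gF a ?m" using assms by (simp add: gF_def)
  also have "move_last_after (gF a ?m) (map (gF a) u) = map (gF a) (move_last_after ?m u)"
    using gF_inj by (subst mla_map) (auto simp: inj_on_def inj_def)
  finally show ?thesis by (simp add: FF_alt mb_def)
qed

lemma mt_FF: assumes "length u \<ge> 2" "last u \<noteq> 0" shows "mt (FF a u) = FF a (mt u)"
proof -
  let ?m = "length u - 1" let ?x = "last u"
  have ne: "u \<noteq> []" using assms by auto
  have lF: "length (FF a u) - 1 = ?m + a" "last (FF a u) = ?x + a"
    using assms ne by (auto simp: last_FF)
  show ?thesis
  proof (cases "?x = ?m")
    case True then show ?thesis using lF by (simp add: mt_alt)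
  next
    case False
    have blk: "map (rho (?m + a) (?x + a)) (rev [1..<a+1]) = rev [1..<a+1]"
      using assms by (intro map_idI) (auto simp: rho_def)
    have g: "rho (?m + a) (?x + a) (gF a w) = gF a (rho ?m ?x w)" for w
      using assms by (auto simp: rho_def gF_def)
    have "mt (FF a u) = map (rho (?m + a) (?x + a)) (FF a u)"
      using False lF by (simp add: mt_alt)
    also have "\<dots> = FF a (map (rho ?m ?x) u)"
      using blk g by (simp add: FF_alt comp_def)
    also have "\<dots> = FF a (mt u)" using False by (simp add: mt_alt)
    finally show ?thesis .
  qed
qed


lemma map_gF_rev_upt: "p \<ge> 1 \<Longrightarrow> map (gF a) (rev [p..<q]) = rev [p+a..<q+a]"
proof -
  assume p: "p \<ge> 1"
  have "map (gF a) [p..<q] = map (\<lambda>w. w + a) [p..<q]" using p by (intro map_cong) (auto simp: gF_def)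
  then show ?thesis by (simp add: rev_map[symmetric] map_plus_upt)
qed

lemma map_rho0_rev_upt: "p \<ge> 1 \<Longrightarrow> q \<le> m \<Longrightarrow> map (rho m 0) (rev [p..<q]) = rev [p+1..<q+1]"
proof -
  assume p: "p \<ge> 1" and q: "q \<le> m"
  have "map (rho m 0) [p..<q] = map Suc [p..<q]" using p q by (intro map_cong) (auto simp: rho_def)
  then show ?thesis by (simp add: rev_map[symmetric] map_Suc_upt)
qed

lemma symk_Suc_alt: "symk (Suc i) = rev [1..<Suc i] @ [0]"
  by (simp add: symk_def upt_conv_Cons)

lemma mt_FF_sym: assumes "j \<ge> 2"
  shows "mt (FF a (symk j)) = (if j = 2 then symk (a + 2) else FF (a + 1) (symk (j - 1)))"
proof -
  obtain i where j: "j = i + 2" using assms by (metis add.commute le_add_diff_inverse)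
  have sj: "symk j = (i + 1) # rev [1..<i+1] @ [0]" using j by (simp add: symk_def upt_conv_Cons)
  have F1: "FF a (symk j) = rev [1..<a+1] @ (i + 1 + a) # rev [a+1..<i+1+a] @ [0]"
    using sj by (simp add: FF_alt map_gF_rev_upt gF_def add.commute)
  have L: "length (FF a (symk j)) - 1 = i + 1 + a" using j by simp
  have La: "last (FF a (symk j)) = 0" using F1 by simp
  have "mt (FF a (symk j)) = map (rho (i + 1 + a) 0) (FF a (symk j))"
    using L La by (simp add: mt_alt)
  also have "\<dots> = rev [Suc (Suc 0)..<a+2] @ 1 # rev [a+2..<i+2+a] @ [0]"
    unfolding F1 by (simp add: map_rho0_rev_upt rho_def numeral_2_eq_2)
  finally have M: "mt (FF a (symk j)) = rev [Suc (Suc 0)..<a+2] @ 1 # rev [a+2..<i+2+a] @ [0]" .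
  have r1: "rev [1..<a+2] = rev [Suc (Suc 0)..<a+2] @ [1]" by (simp add: upt_conv_Cons)
  show ?thesis
  proof (cases "i = 0")
    case True
    have "rev [0..<a+2] = rev [Suc (Suc 0)..<a+2] @ [1, 0]" by (simp add: upt_conv_Cons)
    then show ?thesis using M True j by (simp add: symk_def)
  next
    case False
    then obtain i' where i: "i = Suc i'" by (cases i) auto
    have "FF (a + 1) (symk (j - 1)) = rev [1..<a+2] @ rev [a+2..<i+2+a] @ [0]"
      using j i by (simp add: FF_alt symk_Suc_alt map_gF_rev_upt gF_def add.commute add.left_commute)
    then show ?thesis using M r1 False j by simp
  qed
qed


lemma isperm_lt: "isperm n t \<Longrightarrow> w \<in> set t \<Longrightarrow> w < n"
  unfolding isperm_def by auto

lemma insm_top: "isperm n u \<Longrightarrow> insm n u = n # u"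
  unfolding insm_def by (auto intro!: map_idI dest: isperm_lt)

lemma insm_inj: "insm h t = insm h' t' \<Longrightarrow> h = h' \<and> t = t'"
proof -
  assume e: "insm h t = insm h' t'"
  then have hh: "h = h'" by (simp add: insm_def)
  have "inj (\<lambda>w::nat. if h \<le> w then w + 1 else w)" by (auto simp: inj_def split: if_splits)
  then show ?thesis using e hh by (simp add: insm_def inj_map_eq_map)
qed

lemma mt_insm:
  assumes "isperm n t" "n \<ge> 1" "h < n"
  shows "mt (insm h t) = insm (h + (if last t < h then 1 else 0)) (mt t)"
proof -
  have len: "length t = n" using isperm_len[OF assms(1)] .
  have ne: "t \<noteq> []" using len assms by auto
  have xl: "last t < n" using isperm_lt[OF assms(1)] ne by auto
  let ?sh = "\<lambda>w::nat. if h \<le> w then w + 1 else w"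
  have ls: "last (insm h t) = ?sh (last t)" using ne by (simp add: insm_def last_map)
  have lens: "length (insm h t) - 1 = n" using len by (simp add: insm_def)
  show ?thesis
  proof (cases "last t = n - 1")
    case True
    then have "last (insm h t) = n" using ls assms by auto
    moreover have "\<not> last t < h" using True assms by simp
    ultimately show ?thesis using True lens len assms by (simp add: mt_alt)
  next
    case False
    let ?x = "last t"
    have xn: "?x < n - 1" using False xl by simp
    have lsn: "last (insm h t) \<noteq> n" using ls xn by auto
    have "mt (insm h t) = map (rho n (?sh ?x)) (insm h t)" using lsn lens ls by (simp add: mt_alt)
    also have "\<dots> = insm (h + (if ?x < h then 1 else 0)) (map (rho (n - 1) ?x) t)"
    proof -
      have hd: "rho n (?sh ?x) h = h + (if ?x < h then 1 else 0)" using assms xn by (auto simp: rho_def)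
      have tl: "map (rho n (?sh ?x) \<circ> ?sh) t =
          map ((\<lambda>w. if h + (if ?x < h then 1 else 0) \<le> w then w + 1 else w) \<circ> rho (n - 1) ?x) t"
        using assms xn by (intro map_cong) (auto simp: rho_def dest: isperm_lt)
      show ?thesis using hd tl by (simp add: insm_def)
    qed
    also have "map (rho (n - 1) ?x) t = mt t" using False len by (simp add: mt_alt)
    finally show ?thesis .
  qed
qed

lemma mt_insm_top:
  assumes "isperm n u" "n \<ge> 1"
  shows "mt (insm n u) = insm (last u + 1) u"
proof -
  have len: "length u = n" using isperm_len[OF assms(1)] .
  have ne: "u \<noteq> []" using len assms by auto
  have xl: "last u < n" using isperm_lt[OF assms(1)] ne by auto
  have "mt (n # u) = map (rho n (last u)) (n # u)" using ne xl len by (simp add: mt_alt)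
  also have "\<dots> = insm (last u + 1) u"
    using xl by (auto simp: insm_def rho_def intro!: map_cong dest: isperm_lt[OF assms(1)])
  finally show ?thesis using insm_top[OF assms(1)] by simp
qed

lemma mb_insm:
  assumes "isperm n t" "n \<ge> 2" "h < n"
  shows "mb (insm h t) = insm h (mb t)"
proof -
  have len: "length t = n" using isperm_len[OF assms(1)] .
  have ne: "t \<noteq> []" using len assms by auto
  define sh where "sh = (\<lambda>w::nat. if h \<le> w then w + 1 else w)"
  have ins: "insm h x = h # map sh x" for x by (simp add: insm_def sh_def)
  have inj: "inj sh" by (auto simp: inj_def sh_def split: if_splits)
  have shn: "sh (n - 1) = n" using assms by (simp add: sh_def)
  have "mb (insm h t) = move_last_after n ([h] @ map sh t)" using len by (simp add: mb_def ins)
  also have "\<dots> = [h] @ move_last_after n (map sh t)" using assms ne by (intro mla_append) (auto simp: sh_def)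
  also have "move_last_after n (map sh t) = map sh (move_last_after (n - 1) t)"
  proof -
    have "inj_on sh (insert (n - 1) (set t))" using inj by (rule inj_on_subset) simp
    from mla_map[OF this] shn show ?thesis by simp
  qed
  finally show ?thesis using len by (simp add: ins mb_def)
qed

lemma mb_insm_top:
  assumes "isperm n u" "n \<ge> 2"
  shows "mb (insm n u) = insm n (rotr u)"
proof -
  have len: "length u = n" using isperm_len[OF assms(1)] .
  have ne: "u \<noteq> []" using len assms by auto
  have u: "u = butlast u @ [last u]" using ne by simp
  have nb: "n \<notin> set (butlast u)" using isperm_lt[OF assms(1)] by (meson in_set_butlastD less_irrefl)
  have nl: "n \<noteq> last u" using isperm_lt[OF assms(1)] ne by (metis last_in_set less_irrefl)
  have "mb (n # u) = move_last_after n ([] @ n # butlast u @ [last u])" using len u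
    by (simp add: mb_def)
  also have "\<dots> = [] @ n # last u # butlast u" using nb nl by (intro mla_split) auto
  finally have "mb (n # u) = n # rotr u" by (simp add: rotr_def)
  moreover have "isperm n (rotr u)" using assms(1) ne u unfolding isperm_def rotr_def
    by (metis distinct.simps(2) distinct1_rotate rotate1.simps(2) set_rotate1 list.set(2) Un_insert_right set_append append_Nil2)
  ultimately show ?thesis using insm_top assms(1) by simp
qed


lemma ww_EE: "m \<ge> 3 \<Longrightarrow> ww m = EE 1 (symk (m - 1))"
proof -
  assume m: "m \<ge> 3"
  define p where "p = m - 3"
  have mp: "m = p + 3" using m p_def by simp
  show ?thesis using map_plus_symk[of 1 "p + 1"]
    by (simp add: mp ww_def EE_def hd_symk tl_symk)
qed

lemma ww_2: "ww 2 = symk 2" by (simp add: ww_def symk_def numeral_2_eq_2)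

lemma last_ww: "m \<ge> 3 \<Longrightarrow> last (ww m) = 1"
  by (simp add: ww_def last_rev)

lemma isperm_ww: "m \<ge> 2 \<Longrightarrow> isperm m (ww m)"
proof -
  assume m: "m \<ge> 2"
  show ?thesis
  proof (cases "m = 2")
    case True then show ?thesis using ww_2 isperm_symk by simp
  next
    case False
    then have "m \<ge> 3" using m by simp
    then show ?thesis using ww_EE isperm_EE[OF isperm_symk, of "m - 1" 1] by simp
  qed
qed

lemma rotr_FF_ww: assumes "m \<ge> 3" shows "rotr (FF i (ww m)) = FF (i + 1) (ww (m - 1))"
proof -
  define p where "p = m - 3"
  have mp: "m = p + 3" using assms p_def by simp
  have r1: "rev [1..<p + 2] = rev [Suc (Suc 0)..<p + 2] @ [1]" by (simp add: upt_conv_Cons)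
  have "FF i (ww m) = rev [1..<i+1] @ (p + 2 + i) # 0 # (rev [Suc (Suc i)..<p + 2 + i] @ [1 + i])"
    using r1 by (simp add: mp FF_alt ww_def gF_def map_gF_rev_upt add.commute add.left_commute)
  then have "rotr (FF i (ww m)) = (1 + i) # rev [1..<i+1] @ (p + 2 + i) # 0 # rev [Suc (Suc i)..<p + 2 + i]"
    by (simp add: rotr_def butlast_append)
  moreover have "FF (i + 1) (ww (m - 1)) = rev [1..<i+2] @ (p + 2 + i) # 0 # rev [Suc (Suc i)..<p + 2 + i]"
    by (simp add: mp FF_alt ww_def gF_def map_gF_rev_upt add.commute add.left_commute)
  ultimately show ?thesis by simp
qed

lemma rotr_FF_sym2: "rotr (FF i (symk 2)) = zz (i + 2)"
  by (simp add: rotr_def FF_alt symk_def zz_def gF_def butlast_append numeral_2_eq_2)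

lemma rotr_zz: "k \<ge> 2 \<Longrightarrow> rotr (zz k) = ww k"
  by (simp add: rotr_def zz_def ww_def butlast_append)

lemma isperm_zz: assumes "k \<ge> 2" shows "isperm k (zz k)"
proof -
  have "set (zz k) = {0..<k}" using assms by (auto simp: zz_def)
  moreover have "distinct (zz k)" using assms by (auto simp: zz_def)
  ultimately show ?thesis by (simp add: isperm_def)
qed

lemma last_zz: "last (zz k) = k - 1" by (simp add: zz_def)
lemma hd_zz: "hd (zz k) = 0" by (simp add: zz_def)
lemma hd_ww: "hd (ww k) = k - 1" by (simp add: ww_def)


inductive inH :: "bool \<Rightarrow> nat \<Rightarrow> nat list \<Rightarrow> bool" where
  sy: "k \<ge> 2 \<Longrightarrow> inH b k (symk k)"
| eP: "inH False j s \<Longrightarrow> j \<ge> 2 \<Longrightarrow> a \<ge> 1 \<Longrightarrow> inH True (j + a) (EE a s)"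
| fQ: "inH True j s \<Longrightarrow> j \<ge> 2 \<Longrightarrow> a \<ge> 1 \<Longrightarrow> inH False (j + a) (FF a s)"

lemma inH_basic: "inH b k t \<Longrightarrow> k \<ge> 2 \<and> isperm k t \<and> hd t \<ge> 1"
proof (induction rule: inH.induct)
  case (sy k b) then show ?case by (simp add: isperm_symk hd_symk)
next
  case (eP j s a) then show ?case using isperm_EE[of j s a] by (simp add: hd_EE)
next
  case (fQ j s a) then show ?case using isperm_FF[of j s a] by (simp add: hd_FF)
qed

lemma inH_len: "inH b k t \<Longrightarrow> length t = k"
  using inH_basic isperm_len by blast

lemma inH_True_last: "inH True k t \<Longrightarrow> t \<noteq> symk k \<Longrightarrow> last t \<noteq> 0"
proof (induction True k t rule: inH.induct)
  case (eP j s a)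
  then have "length s \<ge> 2" using inH_len by auto
  then show ?case using eP last_EE by simp
qed simp_all

lemma inH_False_hd: "inH False k t \<Longrightarrow> t \<noteq> symk k \<Longrightarrow> hd t \<noteq> k - 1"
proof (induction False k t rule: inH.induct)
  case (fQ j s a)
  then show ?case by (simp add: hd_FF)
qed simp_all

lemma mb_symk: "k \<ge> 2 \<Longrightarrow> mb (symk k) = (if k = 2 then symk 2 else EE 1 (symk (k - 1)))"
  using mb_EE_sym[of k 0] by (cases "k = 2") (auto simp: EE_0 symk_def numeral_2_eq_2)

lemma mt_symk: "k \<ge> 2 \<Longrightarrow> mt (symk k) = (if k = 2 then symk 2 else FF 1 (symk (k - 1)))"
  using mt_FF_sym[of k 0] by (cases "k = 2") (auto simp: numeral_2_eq_2)

lemma inH_closed: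
  assumes "inH b k t"
  shows "if b then inH True k (mb t) \<and> (t \<noteq> symk k \<longrightarrow> inH True k (mt t))
         else inH False k (mt t) \<and> (t \<noteq> symk k \<longrightarrow> inH False k (mb t))"
  using assms
proof (induction rule: inH.induct)
  case (sy k b)
  show ?case
  proof (cases b)
    case True
    have "inH True k (mb (symk k))"
    proof (cases "k = 2")
      case True then show ?thesis using mb_symk[of 2] inH.sy[of 2] by simp
    next
      case False
      then have "inH True ((k - 1) + 1) (EE 1 (symk (k - 1)))" using sy by (intro inH.eP inH.sy) auto
      then show ?thesis using mb_symk[of k] False sy by simp
    qed
    then show ?thesis using True by simp
  next
    case False
    have "inH False k (mt (symk k))"
    proof (cases "k = 2")
      case True then show ?thesis using mt_symk[of 2] inH.sy[of 2] by simp
    next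
      case False
      then have "inH False ((k - 1) + 1) (FF 1 (symk (k - 1)))" using sy by (intro inH.fQ inH.sy) auto
      then show ?thesis using mt_symk[of k] False sy by simp
    qed
    then show ?thesis using False by simp
  qed
next
  case (eP j s a)
  have ls: "length s = j" using eP(1) inH_len by blast
  have IH: "inH False j (mt s)" "s \<noteq> symk j \<Longrightarrow> inH False j (mb s)" using eP.IH by auto
  have mbE: "inH True (j + a) (mb (EE a s))"
  proof (cases "s = symk j")
    case True
    show ?thesis
    proof (cases "j = 2")
      case True
      then show ?thesis using mb_EE_sym[of 2 a] \<open>s = symk j\<close> inH.sy[of "a + 2" True] by (simp add: add.commute)
    next
      case False
      then have "inH True ((j - 1) + (a + 1)) (EE (a + 1) (symk (j - 1)))"
        using eP by (intro inH.eP inH.sy) auto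
      then show ?thesis using mb_EE_sym[of j a] False eP \<open>s = symk j\<close> by simp
    qed
  next
    case False
    have "hd s \<noteq> length s - 1" using inH_False_hd[OF eP(1) False] ls by simp
    then have "mb (EE a s) = EE a (mb s)" using mb_EE ls eP by simp
    then show ?thesis using inH.eP[OF IH(2)[OF False] eP(2,3)] by simp
  qed
  have mtE: "inH True (j + a) (mt (EE a s))"
    using mt_EE[of s a] ls eP inH.eP[OF IH(1) eP(2,3)] by simp
  show ?case using mbE mtE by simp
next
  case (fQ j s a)
  have ls: "length s = j" using fQ(1) inH_len by blast
  have IH: "inH True j (mb s)" "s \<noteq> symk j \<Longrightarrow> inH True j (mt s)" using fQ.IH by auto
  have mtF: "inH False (j + a) (mt (FF a s))"
  proof (cases "s = symk j")
    case True
    show ?thesis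
    proof (cases "j = 2")
      case True
      then show ?thesis using mt_FF_sym[of 2 a] \<open>s = symk j\<close> inH.sy[of "a + 2" False] by (simp add: add.commute)
    next
      case False
      then have "inH False ((j - 1) + (a + 1)) (FF (a + 1) (symk (j - 1)))"
        using fQ by (intro inH.fQ inH.sy) auto
      then show ?thesis using mt_FF_sym[of j a] False fQ \<open>s = symk j\<close> by simp
    qed
  next
    case False
    have "last s \<noteq> 0" using inH_True_last[OF fQ(1) False] .
    then have "mt (FF a s) = FF a (mt s)" using mt_FF ls fQ by simp
    then show ?thesis using inH.fQ[OF IH(2)[OF False] fQ(2,3)] by simp
  qed
  have mbF: "inH False (j + a) (mb (FF a s))"
    using mb_FF[of s a] ls fQ inH.fQ[OF IH(1) fQ(2,3)] by simp
  show ?case using mbF mtF by simp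
qed

lemma inH_closed_any:
  assumes "inH b k t"
  shows "\<exists>b'. inH b' k (mt t)" "\<exists>b'. inH b' k (mb t)"
proof -
  show "\<exists>b'. inH b' k (mt t)"
  proof (cases "b \<or> t = symk k")
    case True
    then show ?thesis
    proof
      assume b: b
      show ?thesis
      proof (cases "t = symk k")
        case True
        have "inH False k t" using True inH_basic[OF assms] by (simp add: inH.sy)
        then show ?thesis using inH_closed[of False k t] by auto
      next
        case False then show ?thesis using inH_closed[OF assms] b by auto
      qed
    next
      assume t: "t = symk k"
      have "inH False k t" using t inH_basic[OF assms] by (simp add: inH.sy)
      then show ?thesis using inH_closed[of False k t] by auto
    qed
  next
    case False then show ?thesis using inH_closed[OF assms] by auto
  qed
  show "\<exists>b'. inH b' k (mb t)"
  proof (cases "\<not> b \<or> t = symk k")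
    case True
    then show ?thesis
    proof
      assume b: "\<not> b"
      show ?thesis
      proof (cases "t = symk k")
        case True
        have "inH True k t" using True inH_basic[OF assms] by (simp add: inH.sy)
        then show ?thesis using inH_closed[of True k t] by auto
      next
        case False then show ?thesis using inH_closed[OF assms] b by auto
      qed
    next
      assume t: "t = symk k"
      have "inH True k t" using t inH_basic[OF assms] by (simp add: inH.sy)
      then show ?thesis using inH_closed[of True k t] by auto
    qed
  next
    case False then show ?thesis using inH_closed[OF assms] by auto
  qed
qed


lemma nth_symk: "i < k \<Longrightarrow> symk k ! i = k - 1 - i"
  by (simp add: symk_def rev_nth)

lemma FF_nth1: "c \<ge> 2 \<Longrightarrow> FF c u ! 1 = c - 1"
  by (simp add: FF_def nth_append rev_nth)

lemma EE_ne_FF: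
  assumes "s \<noteq> []" "hd s \<ge> 1" "a \<ge> 1" "c \<ge> 1"
  shows "EE a s \<noteq> FF c u"
proof
  assume e: "EE a s = FF c u"
  then have h: "hd s + a = c" using hd_EE[of a s] hd_FF[OF assms(4), of u] by simp
  show False
  proof (cases "c \<ge> 2")
    case True
    have "a - 1 = c - 1" using e EE_nth1[OF assms(3), of s] FF_nth1[OF True, of u] by simp
    then show False using h assms by simp
  next
    case False then show False using h assms by simp
  qed
qed

lemma EE_ne_symk: "a \<ge> 1 \<Longrightarrow> a + 2 \<le> k \<Longrightarrow> EE a s \<noteq> symk k"
  using EE_nth1[of a s] nth_symk[of 1 k] by auto

lemma FF_ne_symk: "a \<ge> 1 \<Longrightarrow> a + 2 \<le> k \<Longrightarrow> FF a u \<noteq> symk k"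
  using hd_FF[of a u] hd_symk[of k] by auto

lemma EE_eq_EE: "EE a s = EE a' s' \<Longrightarrow> a \<ge> 1 \<Longrightarrow> a' \<ge> 1 \<Longrightarrow> s \<noteq> [] \<Longrightarrow> s' \<noteq> [] \<Longrightarrow> a = a' \<and> s = s'"
  using EE_nth1[of a s] EE_nth1[of a' s'] EE_inj by (metis diff_le_self le_antisym Suc_pred' diff_Suc_1 le_add_diff_inverse2 One_nat_def)

lemma FF_eq_FF: "FF a u = FF a' u' \<Longrightarrow> a \<ge> 1 \<Longrightarrow> a' \<ge> 1 \<Longrightarrow> a = a' \<and> u = u'"
  using hd_FF[of a u] hd_FF[of a' u'] FF_inj by metis

definition Pset :: "nat \<Rightarrow> nat list set" where "Pset k = {t. inH True k t}"
definition Qset :: "nat \<Rightarrow> nat list set" where "Qset k = {t. inH False k t}"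

lemma Pset_eq: "k \<ge> 2 \<Longrightarrow> Pset k = insert (symk k) (\<Union>j\<in>{2..<k}. EE (k - j) ` Qset j)"
proof (intro set_eqI iffI)
  fix t assume k: "k \<ge> 2" and t: "t \<in> Pset k"
  then have "inH True k t" by (simp add: Pset_def)
  then show "t \<in> insert (symk k) (\<Union>j\<in>{2..<k}. EE (k - j) ` Qset j)"
  proof (cases rule: inH.cases)
    case (eP j s a)
    then show ?thesis by (auto simp: Qset_def intro!: bexI[of _ j])
  qed simp_all
next
  fix t assume k: "k \<ge> 2" and t: "t \<in> insert (symk k) (\<Union>j\<in>{2..<k}. EE (k - j) ` Qset j)"
  then show "t \<in> Pset k"
  proof (cases "t = symk k")
    case True then show ?thesis using k by (simp add: Pset_def inH.sy)
  next
    case False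
    then obtain j s where j: "j \<in> {2..<k}" "s \<in> Qset j" "t = EE (k - j) s" using t by auto
    then have "inH True (j + (k - j)) (EE (k - j) s)" by (intro inH.eP) (auto simp: Qset_def)
    then show ?thesis using j by (simp add: Pset_def)
  qed
qed

lemma Qset_eq: "k \<ge> 2 \<Longrightarrow> Qset k = insert (symk k) (\<Union>j\<in>{2..<k}. FF (k - j) ` Pset j)"
proof (intro set_eqI iffI)
  fix t assume k: "k \<ge> 2" and t: "t \<in> Qset k"
  then have "inH False k t" by (simp add: Qset_def)
  then show "t \<in> insert (symk k) (\<Union>j\<in>{2..<k}. FF (k - j) ` Pset j)"
  proof (cases rule: inH.cases)
    case (fQ j s a)
    then show ?thesis by (auto simp: Pset_def intro!: bexI[of _ j])
  qed simp_all
next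
  fix t assume k: "k \<ge> 2" and t: "t \<in> insert (symk k) (\<Union>j\<in>{2..<k}. FF (k - j) ` Pset j)"
  then show "t \<in> Qset k"
  proof (cases "t = symk k")
    case True then show ?thesis using k by (simp add: Qset_def inH.sy)
  next
    case False
    then obtain j s where j: "j \<in> {2..<k}" "s \<in> Pset j" "t = FF (k - j) s" using t by auto
    then have "inH False (j + (k - j)) (FF (k - j) s)" by (intro inH.fQ) (auto simp: Pset_def)
    then show ?thesis using j by (simp add: Qset_def)
  qed
qed

lemma geom: "k \<ge> 2 \<Longrightarrow> (\<Sum>j\<in>{2..<k}. (2::nat) ^ (j - 2)) = 2 ^ (k - 2) - 1"
proof (induction k rule: dec_induct)
  case base then show ?case by simp
next
  case (step k)
  have "(\<Sum>j\<in>{2..<Suc k}. (2::nat) ^ (j - 2)) = (\<Sum>j\<in>{2..<k}. 2 ^ (j - 2)) + 2 ^ (k - 2)"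
    using step(1) by simp
  also have "\<dots> = 2 ^ (k - 2) - 1 + 2 ^ (k - 2)" using step by simp
  also have "\<dots> = 2 ^ (Suc k - 2) - 1"
  proof -
    have "(1::nat) \<le> 2 ^ (k - 2)" by simp
    moreover have "Suc k - 2 = Suc (k - 2)" using step(1) by simp
    ultimately show ?thesis by simp
  qed
  finally show ?case .
qed

lemma card_PQ: "k \<ge> 2 \<Longrightarrow> finite (Pset k) \<and> finite (Qset k) \<and> card (Pset k) = 2 ^ (k - 2) \<and> card (Qset k) = 2 ^ (k - 2)"
proof (induction k rule: less_induct)
  case (less k)
  have IH: "\<And>j. j \<in> {2..<k} \<Longrightarrow> finite (Pset j) \<and> finite (Qset j) \<and> card (Pset j) = 2 ^ (j - 2) \<and> card (Qset j) = 2 ^ (j - 2)"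
    using less.IH by auto
  have neQ: "s \<noteq> []" if "s \<in> Qset j" "j \<ge> 2" for s j using that inH_len by (fastforce simp: Qset_def)
  have neP: "s \<noteq> []" if "s \<in> Pset j" "j \<ge> 2" for s j using that inH_len by (fastforce simp: Pset_def)
  have finU: "finite (\<Union>j\<in>{2..<k}. EE (k - j) ` Qset j)" using IH by auto
  have symU: "symk k \<notin> (\<Union>j\<in>{2..<k}. EE (k - j) ` Qset j)"
  proof
    assume "symk k \<in> (\<Union>j\<in>{2..<k}. EE (k - j) ` Qset j)"
    then obtain x s where x: "x \<in> {2..<k}" and e: "symk k = EE (k - x) s" by auto
    have "1 \<le> k - x" "k - x + 2 \<le> k" using x by auto
    with EE_ne_symk[of "k - x" k s] e show False by simp
  qed
  have cardU: "card (\<Union>j\<in>{2..<k}. EE (k - j) ` Qset j) = (\<Sum>j\<in>{2..<k}. card (EE (k - j) ` Qset j))"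
  proof (rule card_UN_disjoint)
    show "finite {2..<k}" by simp
    show "\<forall>i\<in>{2..<k}. finite (EE (k - i) ` Qset i)" using IH by auto
    show "\<forall>i\<in>{2..<k}. \<forall>j\<in>{2..<k}. i \<noteq> j \<longrightarrow> EE (k - i) ` Qset i \<inter> EE (k - j) ` Qset j = {}"
    proof (intro ballI impI)
      fix i j assume ij: "i \<in> {2..<k}" "j \<in> {2..<k}" "i \<noteq> j"
      show "EE (k - i) ` Qset i \<inter> EE (k - j) ` Qset j = {}"
      proof (rule ccontr)
        assume "EE (k - i) ` Qset i \<inter> EE (k - j) ` Qset j \<noteq> {}"
        then obtain s s' where ss: "s \<in> Qset i" "s' \<in> Qset j" "EE (k - i) s = EE (k - j) s'" by auto
        have "s \<noteq> []" "s' \<noteq> []" using neQ ss ij by auto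
        moreover have "k - i \<ge> 1" "k - j \<ge> 1" using ij by auto
        ultimately have "k - i = k - j" using EE_eq_EE[OF ss(3)] by blast
        then show False using ij by auto
      qed
    qed
  qed
  have cardE: "card (EE (k - j) ` Qset j) = card (Qset j)" if "j \<in> {2..<k}" for j
    using that neQ EE_inj by (intro card_image inj_onI) auto
  have cardP: "card (Pset k) = 2 ^ (k - 2)"
  proof -
    have "card (Pset k) = Suc (\<Sum>j\<in>{2..<k}. card (Qset j))"
      using Pset_eq[OF less.prems] finU symU cardU cardE by simp
    also have "\<dots> = Suc (\<Sum>j\<in>{2..<k}. 2 ^ (j - 2))" using IH by simp
    also have "\<dots> = 2 ^ (k - 2)" using geom[OF less.prems] by simp
    finally show ?thesis .
  qed
  have finV: "finite (\<Union>j\<in>{2..<k}. FF (k - j) ` Pset j)" using IH by auto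
  have symV: "symk k \<notin> (\<Union>j\<in>{2..<k}. FF (k - j) ` Pset j)"
  proof
    assume "symk k \<in> (\<Union>j\<in>{2..<k}. FF (k - j) ` Pset j)"
    then obtain x s where x: "x \<in> {2..<k}" and e: "symk k = FF (k - x) s" by auto
    have "1 \<le> k - x" "k - x + 2 \<le> k" using x by auto
    with FF_ne_symk[of "k - x" k s] e show False by simp
  qed
  have cardV: "card (\<Union>j\<in>{2..<k}. FF (k - j) ` Pset j) = (\<Sum>j\<in>{2..<k}. card (FF (k - j) ` Pset j))"
  proof (rule card_UN_disjoint)
    show "finite {2..<k}" by simp
    show "\<forall>i\<in>{2..<k}. finite (FF (k - i) ` Pset i)" using IH by auto
    show "\<forall>i\<in>{2..<k}. \<forall>j\<in>{2..<k}. i \<noteq> j \<longrightarrow> FF (k - i) ` Pset i \<inter> FF (k - j) ` Pset j = {}"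
    proof (intro ballI impI)
      fix i j assume ij: "i \<in> {2..<k}" "j \<in> {2..<k}" "i \<noteq> j"
      show "FF (k - i) ` Pset i \<inter> FF (k - j) ` Pset j = {}"
      proof (rule ccontr)
        assume "FF (k - i) ` Pset i \<inter> FF (k - j) ` Pset j \<noteq> {}"
        then obtain s s' where ss: "FF (k - i) s = FF (k - j) s'" by auto
        have "k - i \<ge> 1" "k - j \<ge> 1" using ij by auto
        then have "k - i = k - j" using FF_eq_FF[OF ss] by blast
        then show False using ij by auto
      qed
    qed
  qed
  have cardF: "card (FF (k - j) ` Pset j) = card (Pset j)" for j
    using FF_inj by (intro card_image inj_onI) auto
  have cardQ: "card (Qset k) = 2 ^ (k - 2)"
  proof -
    have "card (Qset k) = Suc (\<Sum>j\<in>{2..<k}. card (Pset j))"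
      using Qset_eq[OF less.prems] finV symV cardV cardF by simp
    also have "\<dots> = Suc (\<Sum>j\<in>{2..<k}. 2 ^ (j - 2))" using IH by simp
    also have "\<dots> = 2 ^ (k - 2)" using geom[OF less.prems] by simp
    finally show ?thesis .
  qed
  show ?case using cardP cardQ finU finV Pset_eq[OF less.prems] Qset_eq[OF less.prems] by simp
qed

lemma PQ_inter: "k \<ge> 2 \<Longrightarrow> Pset k \<inter> Qset k = {symk k}"
proof (intro set_eqI iffI)
  fix t assume k: "k \<ge> 2" and t: "t \<in> Pset k \<inter> Qset k"
  then have p: "inH True k t" and q: "inH False k t" by (auto simp: Pset_def Qset_def)
  show "t \<in> {symk k}"
  proof (rule ccontr)
    assume ne: "t \<notin> {symk k}"
    from p ne obtain j s a where "t = EE a s" "inH False j s" "j \<ge> 2" "a \<ge> 1"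
      by (cases rule: inH.cases) auto
    moreover from q ne obtain c u where "t = FF c u" "c \<ge> 1"
      by (cases rule: inH.cases) auto
    ultimately show False using EE_ne_FF inH_basic inH_len by (metis le_numeral_extra(4) list.size(3) not_numeral_le_zero)
  qed
next
  fix t assume "k \<ge> 2" "t \<in> {symk k}"
  then show "t \<in> Pset k \<inter> Qset k" by (auto simp: Pset_def Qset_def inH.sy)
qed

lemma card_H: "k \<ge> 2 \<Longrightarrow> card (Pset k \<union> Qset k) = 2 ^ (k - 1) - 1"
proof -
  assume k: "k \<ge> 2"
  have c: "card (Pset k \<union> Qset k) + card (Pset k \<inter> Qset k) = card (Pset k) + card (Qset k)"
    using card_Un_Int[of "Pset k" "Qset k"] card_PQ[OF k] by simp
  have "2 ^ (k - 1) = 2 * (2::nat) ^ (k - 2)"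
  proof -
    define i where "i = k - 2"
    have "k = i + 2" using k i_def by simp
    then show ?thesis by simp
  qed
  then show ?thesis using c card_PQ[OF k] PQ_inter[OF k] by simp
qed


inductive mk :: "bool \<Rightarrow> nat \<Rightarrow> nat list \<Rightarrow> nat \<Rightarrow> bool" where
  m_sy: "k \<ge> 3 \<Longrightarrow> mk b k (symk k) 2"
| m_E2: "inH False j s \<Longrightarrow> j \<ge> 2 \<Longrightarrow> a \<ge> 2 \<Longrightarrow> mk True (j + a) (EE a s) 2"
| m_E1s: "j \<ge> 2 \<Longrightarrow> mk True (j + 1) (EE 1 (symk j)) 2"
| m_E1F: "inH True j u \<Longrightarrow> j \<ge> 2 \<Longrightarrow> c \<ge> 1 \<Longrightarrow> mk True (j + c + 1) (EE 1 (FF c u)) (c + 2)"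
| m_F: "mk True j t h \<Longrightarrow> a \<ge> 1 \<Longrightarrow> mk False (j + a) (FF a t) (h + a)"
| m_F2: "a \<ge> 1 \<Longrightarrow> mk False (a + 2) (FF a (symk 2)) 1"

lemma mk_basic: "mk b k t h \<Longrightarrow> inH b k t \<and> k \<ge> 3 \<and> 1 \<le> h \<and> h < k"
proof (induction rule: mk.induct)
  case (m_sy k b) then show ?case by (simp add: inH.sy)
next
  case (m_E2 j s a) then show ?case by (simp add: inH.eP)
next
  case (m_E1s j)
  have "inH True (j + 1) (EE 1 (symk j))" using m_E1s by (intro inH.eP inH.sy) auto
  then show ?case using m_E1s by simp
next
  case (m_E1F j u c)
  have "inH False (j + c) (FF c u)" using m_E1F by (intro inH.fQ) auto
  then have "inH True (j + c + 1) (EE 1 (FF c u))" using m_E1F by (intro inH.eP) auto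
  then show ?case using m_E1F by simp
next
  case (m_F j t h a)
  then show ?case by (simp add: inH.fQ)
next
  case (m_F2 a)
  have "inH False (2 + a) (FF a (symk 2))" using m_F2 by (intro inH.fQ inH.sy) auto
  then show ?case using m_F2 by (simp add: add.commute)
qed

lemma inH_True_2: assumes "inH True 2 s" shows "s = symk 2"
  using assms by (cases rule: inH.cases) auto

lemma mk_total: "inH b k t \<Longrightarrow> k \<ge> 3 \<Longrightarrow> \<exists>h. mk b k t h"
proof (induction rule: inH.induct)
  case (sy k b) then show ?case using mk.m_sy by blast
next
  case (eP j s a)
  show ?case
  proof (cases "a \<ge> 2")
    case True then show ?thesis using eP mk.m_E2 by blast
  next
    case False
    then have a1: "a = 1" using eP by simp
    from eP(1) show ?thesis
    proof (cases rule: inH.cases)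
      case (sy) then show ?thesis using a1 eP mk.m_E1s by blast
    next
      case (fQ j' u c)
      then have "mk True (j' + c + 1) (EE 1 (FF c u)) (c + 2)" by (intro mk.m_E1F) auto
      then show ?thesis using a1 fQ by auto
    qed simp
  qed
next
  case (fQ j s a)
  show ?case
  proof (cases "j \<ge> 3")
    case True
    then obtain h where "mk True j s h" using fQ by blast
    then show ?thesis using fQ mk.m_F by blast
  next
    case False
    then have "j = 2" using fQ by simp
    then have "s = symk 2" using fQ inH_True_2 by simp
    then show ?thesis using \<open>j = 2\<close> mk.m_F2[OF fQ.hyps(3)] by (auto simp: add.commute)
  qed
qed

lemma symk_ne_FF: "c \<ge> 1 \<Longrightarrow> length u \<ge> 2 \<Longrightarrow> symk j \<noteq> FF c u"
proof
  assume c: "c \<ge> 1" and u: "length u \<ge> 2" and e: "symk j = FF c u"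
  then have "j = length u + c" using len_symk len_FF by metis
  then show False using FF_ne_symk[OF c, of j u] e u by simp
qed

lemma mk_sym: assumes "mk b k (symk k) h" shows "h = 2"
  using assms
proof (cases rule: mk.cases)
  case (m_E2 j s a) then show ?thesis using EE_ne_symk[of a k s] by simp
next
  case (m_E1s j) then show ?thesis using EE_ne_symk[of 1 k "symk j"] by simp
next
  case (m_E1F j u c) then show ?thesis using EE_ne_symk[of 1 k "FF c u"] by simp
next
  case (m_F j t h' a)
  then have f: "mk True j t h'" "k = j + a" "symk k = FF a t" "1 \<le> a" by auto
  then show ?thesis using mk_basic[OF f(1)] FF_ne_symk[of a k t] by simp
next
  case (m_F2 a) then show ?thesis using FF_ne_symk[of a k "symk 2"] by simp
qed simp


lemma EE_FF_inH: "inH b j s \<Longrightarrow> a \<ge> 1 \<Longrightarrow> c \<ge> 1 \<Longrightarrow> EE a s \<noteq> FF c u"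
  using EE_ne_FF inH_basic inH_len by (metis list.size(3) not_numeral_le_zero)

lemma EE_eq_inH: "EE a s = EE a' s' \<Longrightarrow> inH b j s \<Longrightarrow> inH b' j' s' \<Longrightarrow> a \<ge> 1 \<Longrightarrow> a' \<ge> 1 \<Longrightarrow> a = a' \<and> s = s'"
  using EE_eq_EE inH_len inH_basic by (metis list.size(3) not_numeral_le_zero)

lemma inH_FF: "inH True j u \<Longrightarrow> j \<ge> 2 \<Longrightarrow> c \<ge> 1 \<Longrightarrow> inH False (j + c) (FF c u)"
  by (rule inH.fQ)

lemma mk_fun: "mk b k t h \<Longrightarrow> mk b' k t h' \<Longrightarrow> h = h'"
proof (induction arbitrary: b' h' rule: mk.induct)
  case (m_sy k b) then show ?case using mk_sym by metis
next
  case (m_E2 j s a)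
  from m_E2.prems show ?case
  proof (cases rule: mk.cases)
    case (m_sy) then show ?thesis using EE_ne_symk[of a "j + a" s] m_E2 by simp
  next
    case (m_E1s j2)
    have "inH False j2 (symk j2)" using m_E1s by (simp add: inH.sy)
    then show ?thesis using m_E1s m_E2 EE_eq_inH[of a s 1 "symk j2" False j False j2] by auto
  next
    case (m_E1F j2 u c)
    have "inH False (j2 + c) (FF c u)" using m_E1F inH_FF by simp
    then show ?thesis using m_E1F m_E2 EE_eq_inH[of a s 1 "FF c u" False j False "j2 + c"] by auto
  next
    case (m_F j2 t2 h2 a2) then show ?thesis using EE_FF_inH[OF m_E2(1), of a a2 t2] m_E2 by auto
  next
    case (m_F2 a2) then show ?thesis using EE_FF_inH[OF m_E2(1), of a a2 "symk 2"] m_E2 by auto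
  qed simp
next
  case (m_E1s j)
  have sj: "inH False j (symk j)" using m_E1s by (simp add: inH.sy)
  from m_E1s.prems show ?case
  proof (cases rule: mk.cases)
    case (m_sy) then show ?thesis using EE_ne_symk[of 1 "j + 1" "symk j"] m_E1s by simp
  next
    case (m_E1F j2 u c)
    have "inH False (j2 + c) (FF c u)" using m_E1F inH_FF by simp
    then have "symk j = FF c u" using m_E1F EE_eq_inH[of 1 "symk j" 1 "FF c u" False j False "j2 + c"] sj by auto
    moreover have "length u \<ge> 2" using m_E1F inH_len by auto
    ultimately show ?thesis using symk_ne_FF m_E1F by blast
  next
    case (m_F j2 t2 h2 a2) then show ?thesis using EE_FF_inH[OF sj, of 1 a2 t2] by auto
  next
    case (m_F2 a2) then show ?thesis using EE_FF_inH[OF sj, of 1 a2 "symk 2"] by auto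
  qed simp_all
next
  case (m_E1F j u c)
  have fu: "inH False (j + c) (FF c u)" using m_E1F inH_FF by simp
  from m_E1F.prems show ?case
  proof (cases rule: mk.cases)
    case (m_sy) then show ?thesis using EE_ne_symk[of 1 "j + c + 1" "FF c u"] m_E1F by simp
  next
    case (m_E2 j2 s2 a2)
    then show ?thesis using EE_eq_inH[of 1 "FF c u" a2 s2 False "j + c" False j2] fu by auto
  next
    case (m_E1s j2)
    have "inH False j2 (symk j2)" using m_E1s by (simp add: inH.sy)
    then have "symk j2 = FF c u" using m_E1s EE_eq_inH[of 1 "FF c u" 1 "symk j2" False "j + c" False j2] fu by auto
    moreover have "length u \<ge> 2" using m_E1F inH_len by auto
    ultimately show ?thesis using symk_ne_FF m_E1F by blast
  next
    case (m_E1F j2 u2 c2)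
    have "inH False (j2 + c2) (FF c2 u2)" using m_E1F inH_FF by simp
    then have "FF c u = FF c2 u2" using m_E1F EE_eq_inH[of 1 "FF c u" 1 "FF c2 u2" False "j + c" False "j2 + c2"] fu by auto
    then show ?thesis using FF_eq_FF m_E1F \<open>c \<ge> 1\<close> by auto
  next
    case (m_F j2 t2 h2 a2) then show ?thesis using EE_FF_inH[OF fu, of 1 a2 t2] by auto
  next
    case (m_F2 a2) then show ?thesis using EE_FF_inH[OF fu, of 1 a2 "symk 2"] by auto
  qed
next
  case (m_F j t h a)
  have tb: "inH True j t \<and> j \<ge> 3" using mk_basic[OF m_F.hyps(1)] by simp
  have ha: "a \<ge> 1" using m_F.hyps(2) .
  have IH: "\<And>b' h'. mk b' j t h' \<Longrightarrow> h = h'" using m_F.IH by blast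
  from m_F.prems show ?case
  proof (cases rule: mk.cases)
    case (m_sy)
    then have "FF a t = symk (j + a)" by simp
    then show ?thesis using FF_ne_symk[of a "j + a" t] ha tb by simp
  next
    case (m_E2 j2 s2 a2) then show ?thesis using EE_FF_inH[of False j2 s2 a2 a t] ha by auto
  next
    case (m_E1s j2)
    have "inH False j2 (symk j2)" using m_E1s by (simp add: inH.sy)
    then show ?thesis using EE_FF_inH[of False j2 "symk j2" 1 a t] ha m_E1s by auto
  next
    case (m_E1F j2 u c)
    have "inH False (j2 + c) (FF c u)" using m_E1F inH_FF by simp
    then show ?thesis using EE_FF_inH[of False "j2 + c" "FF c u" 1 a t] ha m_E1F by auto
  next
    case (m_F j2 t2 h2 a2)
    then have "a = a2" "t = t2" using FF_eq_FF ha by blast+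
    then have "mk True j t h2" using m_F by simp
    then show ?thesis using IH \<open>a = a2\<close> m_F by auto
  next
    case (m_F2 a2)
    then have "t = symk 2" using FF_eq_FF ha by blast
    then show ?thesis using tb inH_len by fastforce
  qed
next
  case (m_F2 a)
  have s2: "inH True 2 (symk 2)" by (simp add: inH.sy)
  from m_F2.prems show ?case
  proof (cases rule: mk.cases)
    case (m_sy) then show ?thesis using FF_ne_symk[of a "a + 2" "symk 2"] m_F2 by simp
  next
    case (m_E2 j2 s2 a2) then show ?thesis using EE_FF_inH[of False j2 s2 a2 a "symk 2"] m_F2 by auto
  next
    case (m_E1s j2)
    have "inH False j2 (symk j2)" using m_E1s by (simp add: inH.sy)
    then show ?thesis using EE_FF_inH[of False j2 "symk j2" 1 a "symk 2"] m_F2 m_E1s by auto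
  next
    case (m_E1F j2 u c)
    have "inH False (j2 + c) (FF c u)" using m_E1F inH_FF by simp
    then show ?thesis using EE_FF_inH[of False "j2 + c" "FF c u" 1 a "symk 2"] m_F2 m_E1F by auto
  next
    case (m_F j2 t2 h2 a2)
    then have "t2 = symk 2" using FF_eq_FF \<open>a \<ge> 1\<close> by metis
    moreover have "mk True j2 t2 h2" using m_F by simp
    ultimately show ?thesis using mk_basic inH_len by fastforce
  qed simp
qed


lemma mk_mb: "mk b k t h \<Longrightarrow> b \<or> t \<noteq> symk k \<Longrightarrow> mk b k (mb t) h"
proof (induction rule: mk.induct)
  case (m_sy k b)
  then have b: b by simp
  have "mk True ((k - 1) + 1) (EE 1 (symk (k - 1))) 2" using m_sy by (intro mk.m_E1s) auto
  then show ?case using mb_symk[of k] m_sy b by simp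
next
  case (m_E2 j s a)
  have ls: "length s = j" using m_E2(1) inH_len by blast
  show ?case
  proof (cases "s = symk j")
    case True
    show ?thesis
    proof (cases "j = 2")
      case True
      then show ?thesis using mb_EE_sym[of 2 a] \<open>s = symk j\<close> mk.m_sy[of "a + 2" True] m_E2 by (simp add: add.commute)
    next
      case False
      have "mk True ((j - 1) + (a + 1)) (EE (a + 1) (symk (j - 1))) 2"
        using m_E2 False by (intro mk.m_E2 inH.sy) auto
      then show ?thesis using mb_EE_sym[of j a] False m_E2 \<open>s = symk j\<close> by simp
    qed
  next
    case False
    have "hd s \<noteq> length s - 1" using inH_False_hd[OF m_E2(1) False] ls by simp
    then have "mb (EE a s) = EE a (mb s)" using mb_EE ls m_E2 by simp
    moreover have "inH False j (mb s)" using inH_closed[OF m_E2(1)] False by simp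
    ultimately show ?thesis using mk.m_E2 m_E2 by simp
  qed
next
  case (m_E1s j)
  show ?case
  proof (cases "j = 2")
    case True
    then show ?thesis using mb_EE_sym[of 2 1] mk.m_sy[of 3 True] by (simp add: numeral_3_eq_3)
  next
    case False
    have "mk True ((j - 1) + 2) (EE 2 (symk (j - 1))) 2"
      using m_E1s False by (intro mk.m_E2 inH.sy) auto
    then show ?thesis using mb_EE_sym[of j 1] False m_E1s by (simp add: numeral_2_eq_2)
  qed
next
  case (m_E1F j u c)
  have lu: "length u = j" using m_E1F(1) inH_len by blast
  have "hd (FF c u) \<noteq> length (FF c u) - 1" using m_E1F lu hd_FF by simp
  moreover have "length (FF c u) \<ge> 2" using lu m_E1F by simp
  ultimately have "mb (EE 1 (FF c u)) = EE 1 (mb (FF c u))" using mb_EE by blast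
  also have "mb (FF c u) = FF c (mb u)" using mb_FF lu m_E1F by simp
  finally have e: "mb (EE 1 (FF c u)) = EE 1 (FF c (mb u))" .
  have "inH True j (mb u)" using inH_closed[OF m_E1F(1)] by simp
  then show ?case using e mk.m_E1F m_E1F by simp
next
  case (m_F j t h a)
  have lt: "length t = j" "j \<ge> 3" using mk_basic[OF m_F(1)] inH_len by auto
  have "mk True j (mb t) h" using m_F by simp
  then show ?case using mb_FF[of t a] lt mk.m_F m_F by simp
next
  case (m_F2 a)
  have "mb (FF a (symk 2)) = FF a (symk 2)" using mb_FF[of "symk 2" a] mb_symk[of 2] by simp
  then show ?case using mk.m_F2 m_F2 by simp
qed

definition NX :: "bool \<Rightarrow> nat \<Rightarrow> nat list \<Rightarrow> nat \<Rightarrow> bool" where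
  "NX b k t h \<longleftrightarrow>
    (h + (if last t < h then 1 else 0) < k \<and> mk b k (mt t) (h + (if last t < h then 1 else 0))) \<or>
    (h + (if last t < h then 1 else 0) = k \<and>
      (if b then mt t = ww k else (\<exists>i. 1 \<le> i \<and> i + 2 \<le> k \<and> mt t = FF i (ww (k - i)))))"

lemma mk_mt: "mk b k t h \<Longrightarrow> (b \<longrightarrow> t \<noteq> symk k) \<Longrightarrow> NX b k t h"
proof (induction rule: mk.induct)
  case (m_sy k b)
  then have b: "\<not> b" by simp
  have mt: "mt (symk k) = FF 1 (symk (k - 1))" using mt_symk[of k] m_sy by simp
  have l: "last (symk k) = 0" using m_sy last_symk by simp
  show ?case
  proof (cases "k = 3")
    case True
    have "mt (symk k) = FF 1 (ww (k - 1))" using mt True ww_2 by simp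
    then show ?thesis using b l True unfolding NX_def by (intro disjI2) auto
  next
    case False
    have "mk False ((k - 1) + 1) (FF 1 (symk (k - 1))) (2 + 1)"
      using m_sy False by (intro mk.m_F mk.m_sy) auto
    then show ?thesis using b l mt m_sy False unfolding NX_def by auto
  qed
next
  case (m_E2 j s a)
  have ls: "length s = j" using m_E2(1) inH_len by blast
  have mt: "mt (EE a s) = EE a (mt s)" using mt_EE ls m_E2 by simp
  have l: "last (EE a s) = last s + a" using last_EE ls m_E2 by simp
  have "inH False j (mt s)" using inH_closed[OF m_E2(1)] by simp
  then have "mk True (j + a) (EE a (mt s)) 2" using mk.m_E2 m_E2 by simp
  then show ?case using mt l m_E2 unfolding NX_def by auto
next
  case (m_E1s j)
  have mt: "mt (EE 1 (symk j)) = EE 1 (mt (symk j))" using mt_EE[of "symk j" 1] m_E1s by simp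
  have l: "last (EE 1 (symk j)) = 1" using last_EE[of "symk j" 1] last_symk m_E1s by simp
  show ?case
  proof (cases "j = 2")
    case True
    have "mt (EE 1 (symk j)) = ww (j + 1)" using mt True mt_symk[of 2] ww_EE[of 3] by simp
    then show ?thesis using l True unfolding NX_def by simp
  next
    case False
    have "mk True ((j - 1) + 1 + 1) (EE 1 (FF 1 (symk (j - 1)))) (1 + 2)"
      using m_E1s False by (intro mk.m_E1F inH.sy) auto
    then show ?thesis using mt mt_symk[of j] l m_E1s False unfolding NX_def by (simp add: numeral_3_eq_3)
  qed
next
  case (m_E1F j u c)
  have lu: "length u = j" using m_E1F(1) inH_len by blast
  have mt: "mt (EE 1 (FF c u)) = EE 1 (mt (FF c u))" using mt_EE[of "FF c u" 1] lu m_E1F by simp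
  have l: "last (EE 1 (FF c u)) = last (FF c u) + 1" using last_EE[of "FF c u" 1] lu m_E1F by simp
  show ?case
  proof (cases "u = symk j")
    case True
    have lF: "last (FF c u) = 0" using True last_FF[of u c] last_symk m_E1F by (simp add: symk_def)
    show ?thesis
    proof (cases "j = 2")
      case True
      have "mt (EE 1 (FF c u)) = ww (j + c + 1)"
        using mt True \<open>u = symk j\<close> mt_FF_sym[of 2 c] ww_EE[of "c + 3"] by (simp add: numeral_3_eq_3)
      then show ?thesis using l lF True m_E1F unfolding NX_def by simp
    next
      case False
      have "mk True ((j - 1) + (c + 1) + 1) (EE 1 (FF (c + 1) (symk (j - 1)))) ((c + 1) + 2)"
        using m_E1F False by (intro mk.m_E1F inH.sy) auto
      then show ?thesis using mt \<open>u = symk j\<close> mt_FF_sym[of j c] l lF m_E1F False unfolding NX_def by simp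
    qed
  next
    case False
    have lu0: "last u \<noteq> 0" using inH_True_last[OF m_E1F(1) False] .
    have mF: "mt (FF c u) = FF c (mt u)" using mt_FF lu m_E1F lu0 by simp
    have une: "u \<noteq> []" using lu m_E1F by auto
    have lF: "last (FF c u) = last u + c" using last_FF[OF une, of c] lu0 by simp
    have "inH True j (mt u)" using inH_closed[OF m_E1F(1)] False by simp
    then have "mk True (j + c + 1) (EE 1 (FF c (mt u))) (c + 2)" using mk.m_E1F m_E1F by simp
    then show ?thesis using mt mF l lF lu0 m_E1F unfolding NX_def by auto
  qed
next
  case (m_F j t h a)
  have tb: "inH True j t" "j \<ge> 3" "h < j" "h \<ge> 1" using mk_basic[OF m_F(1)] by auto
  have lt: "length t = j" using tb inH_len by blast
  show ?case
  proof (cases "t = symk j")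
    case True
    have h2: "h = 2" using mk_sym m_F(1) True by blast
    have lF: "last (FF a t) = 0" using True last_FF[of t a] last_symk tb by (simp add: symk_def)
    have mt: "mt (FF a t) = FF (a + 1) (symk (j - 1))" using True mt_FF_sym[of j a] tb by simp
    show ?thesis
    proof (cases "j = 3")
      case True
      have "FF (a + 1) (symk (j - 1)) = FF (a + 1) (ww (j + a - (a + 1)))" using True ww_2 by simp
      then show ?thesis using mt lF h2 True m_F unfolding NX_def by auto
    next
      case False
      have "mk False ((j - 1) + (a + 1)) (FF (a + 1) (symk (j - 1))) (2 + (a + 1))"
        using tb False by (intro mk.m_F mk.m_sy) auto
      then show ?thesis using mt lF h2 tb False m_F unfolding NX_def by auto
    qed
  next
    case False
    have lt0: "last t \<noteq> 0" using inH_True_last[OF tb(1) False] .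
    have mt: "mt (FF a t) = FF a (mt t)" using mt_FF lt tb lt0 by simp
    have tne: "t \<noteq> []" using lt tb by auto
    have lF: "last (FF a t) = last t + a" using last_FF[OF tne, of a] lt0 by simp
    have IH: "NX True j t h" using m_F.IH False by simp
    have eqc: "(last t + a < h + a) = (last t < h)" by simp
    show ?thesis
    proof (cases "h + (if last t < h then 1 else 0) < j")
      case True
      then have "mk True j (mt t) (h + (if last t < h then 1 else 0))" using IH unfolding NX_def by auto
      then have "mk False (j + a) (FF a (mt t)) (h + (if last t < h then 1 else 0) + a)" using mk.m_F m_F by blast
      then show ?thesis using True mt lF unfolding NX_def by auto
    next
      case False
      then have "h + (if last t < h then 1 else 0) = j" "mt t = ww j" using IH unfolding NX_def by auto
      then show ?thesis using mt lF m_F tb unfolding NX_def by auto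
    qed
  qed
next
  case (m_F2 a)
  have lF: "last (FF a (symk 2)) = 0" by (simp add: FF_def symk_def gF_def numeral_2_eq_2)
  have mt: "mt (FF a (symk 2)) = symk (a + 2)" using mt_FF_sym[of 2 a] by simp
  have "mk False (a + 2) (symk (a + 2)) 2" using m_F2 by (intro mk.m_sy) auto
  then show ?case using lF mt m_F2 unfolding NX_def by (auto simp: numeral_2_eq_2)
qed


definition Wc :: "nat \<Rightarrow> nat list set" where "Wc n = (\<lambda>i. FF i (ww (n - i))) ` {0..n-2}"
definition Cy :: "nat \<Rightarrow> nat list set" where "Cy n = insert (zz n) (Wc n)"
definition Cn :: "nat \<Rightarrow> nat list set" where
  "Cn n = {insm h t | t h. \<exists>b. mk b n t h} \<union> insm n ` Cy n"

lemma Wc_isperm: "n \<ge> 3 \<Longrightarrow> u \<in> Wc n \<Longrightarrow> isperm n u"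
proof -
  assume n: "n \<ge> 3" and u: "u \<in> Wc n"
  then obtain i where i: "i \<le> n - 2" "u = FF i (ww (n - i))" by (auto simp: Wc_def)
  have "isperm (n - i) (ww (n - i))" using i n by (intro isperm_ww) auto
  then have "isperm ((n - i) + i) (FF i (ww (n - i)))" using i n by (intro isperm_FF) auto
  then show ?thesis using i n by simp
qed

lemma Cy_isperm: "n \<ge> 3 \<Longrightarrow> u \<in> Cy n \<Longrightarrow> isperm n u"
  using Wc_isperm isperm_zz by (auto simp: Cy_def)

lemma Cy_rotr: "n \<ge> 3 \<Longrightarrow> u \<in> Cy n \<Longrightarrow> rotr u \<in> Cy n"
proof -
  assume n: "n \<ge> 3" and u: "u \<in> Cy n"
  show ?thesis
  proof (cases "u = zz n")
    case True
    have "ww n = FF 0 (ww (n - 0))" by simp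
    then have "ww n \<in> Wc n" unfolding Wc_def by (intro image_eqI[of _ _ 0]) auto
    then show ?thesis using True rotr_zz n by (simp add: Cy_def)
  next
    case False
    then obtain i where i: "i \<le> n - 2" "u = FF i (ww (n - i))" using u by (auto simp: Cy_def Wc_def)
    show ?thesis
    proof (cases "i = n - 2")
      case True
      then have "u = FF i (symk 2)" using i n ww_2 by (simp add: numeral_2_eq_2)
      then have "rotr u = zz (i + 2)" using rotr_FF_sym2 by simp
      moreover have "i + 2 = n" using True n by simp
      ultimately show ?thesis by (simp add: Cy_def)
    next
      case False
      then have r: "rotr u = FF (i + 1) (ww (n - i - 1))" using i n rotr_FF_ww[of "n - i" i] by simp
      have "FF (i + 1) (ww (n - i - 1)) \<in> Wc n" unfolding Wc_def
        using False i by (intro image_eqI[of _ _ "i + 1"]) auto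
      then show ?thesis using r by (simp add: Cy_def)
    qed
  qed
qed

lemma Wc_exit: "n \<ge> 3 \<Longrightarrow> u \<in> Wc n \<Longrightarrow> last u + 1 < n \<and> (\<exists>b. mk b n u (last u + 1))"
proof -
  assume n: "n \<ge> 3" and u: "u \<in> Wc n"
  then obtain i where i: "i \<le> n - 2" "u = FF i (ww (n - i))" by (auto simp: Wc_def)
  show ?thesis
  proof (cases "i = 0")
    case True
    then have u': "u = EE 1 (symk (n - 1))" using i n ww_EE by simp
    have l: "last u = 1" using u' last_EE[of "symk (n - 1)" 1] last_symk n by simp
    have "mk True ((n - 1) + 1) (EE 1 (symk (n - 1))) 2" using n by (intro mk.m_E1s) auto
    then have mk2: "mk True n u 2" using u' n by simp
    have e: "last u + 1 = 2" using l by simp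
    show ?thesis unfolding e using mk2 n by auto
  next
    case False
    show ?thesis
    proof (cases "i = n - 2")
      case True
      then have u': "u = FF i (symk 2)" using i n ww_2 by (simp add: numeral_2_eq_2)
      have l: "last u = 0" using u' by (simp add: FF_def symk_def numeral_2_eq_2)
      have "mk False (i + 2) (FF i (symk 2)) 1" using False by (intro mk.m_F2) auto
      moreover have "i + 2 = n" using True n by simp
      ultimately show ?thesis using u' l by auto
    next
      case ni: False
      define m where "m = n - i"
      have m: "m \<ge> 3" "n = m + i" using ni i m_def by auto
      have w: "ww m = EE 1 (symk (m - 1))" using m ww_EE by simp
      have lw: "last (ww m) = 1" using last_ww m by simp
      have "mk True ((m - 1) + 1) (EE 1 (symk (m - 1))) 2" using m by (intro mk.m_E1s) auto
      then have "mk True m (ww m) 2" using w m by simp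
      then have mkF: "mk False (m + i) (FF i (ww m)) (2 + i)" using False by (intro mk.m_F) auto
      have u': "u = FF i (ww m)" using i m_def by simp
      have lF: "last (FF i (ww m)) = 1 + i" using last_FF[of "ww m" i] lw by (simp add: ww_def)
      have e: "last u + 1 = 2 + i" using u' lF by simp
      have mk': "mk False n u (2 + i)" using mkF u' m(2) by simp
      have lt: "2 + i < n" using m(1,2) by linarith
      show ?thesis unfolding e using mk' lt by blast
    qed
  qed
qed

lemma mk_isperm: "mk b n t h \<Longrightarrow> isperm n t \<and> h < n \<and> n \<ge> 3"
  using mk_basic inH_basic by blast

lemma rest_mb:
  assumes "mk b n t h"
  shows "\<exists>b'. mk b' n (mb t) h"
proof (cases "b \<or> t \<noteq> symk n")
  case True then show ?thesis using mk_mb[OF assms] by blast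
next
  case False
  then have "mk True n t h" using assms mk_sym[of b n h] mk.m_sy mk_isperm by auto
  then show ?thesis using mk_mb by blast
qed

lemma rest_mt:
  assumes "mk b n t h"
  shows "\<exists>b'. NX b' n t h"
proof (cases "b \<longrightarrow> t \<noteq> symk n")
  case True then show ?thesis using mk_mt[OF assms] by blast
next
  case False
  then have "mk False n t h" using assms mk_sym[of b n h] mk.m_sy mk_isperm by auto
  then show ?thesis using mk_mt by blast
qed

lemma NX_cases:
  assumes "NX b n t h" "n \<ge> 2"
  shows "(h + (if last t < h then 1 else 0) < n \<and> mk b n (mt t) (h + (if last t < h then 1 else 0))) \<or>
         (h + (if last t < h then 1 else 0) = n \<and> mt t \<in> Wc n)"
proof (cases b)
  case True
  have w: "ww n \<in> Wc n" unfolding Wc_def by (rule image_eqI[of _ _ 0]) auto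
  show ?thesis using assms(1) True w unfolding NX_def by auto
next
  case False
  have w: "i + 2 \<le> n \<Longrightarrow> FF i (ww (n - i)) \<in> Wc n" for i
    unfolding Wc_def by (rule image_eqI[of _ _ i]) auto
  show ?thesis using assms(1) False w unfolding NX_def by auto
qed

lemma Cn_closed:
  assumes "x \<in> Cn n" "n \<ge> 3"
  shows "mt x \<in> Cn n \<and> mb x \<in> Cn n"
proof (cases "x \<in> insm n ` Cy n")
  case True
  then obtain u where u: "u \<in> Cy n" "x = insm n u" by auto
  have pu: "isperm n u" using Cy_isperm assms(2) u by blast
  have mbx: "mb x = insm n (rotr u)" using mb_insm_top[OF pu] assms(2) u by simp
  have "rotr u \<in> Cy n" using Cy_rotr assms(2) u by blast
  then have B: "mb x \<in> Cn n" using mbx by (simp add: Cn_def)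
  have mtx: "mt x = insm (last u + 1) u" using mt_insm_top[OF pu] assms(2) u by simp
  have A: "mt x \<in> Cn n"
  proof (cases "u = zz n")
    case True
    then have "mt x = x" using mtx u last_zz assms(2) by simp
    then show ?thesis using assms(1) by simp
  next
    case False
    then have "u \<in> Wc n" using u by (simp add: Cy_def)
    then obtain b where "mk b n u (last u + 1)" using Wc_exit assms(2) by blast
    then show ?thesis using mtx by (auto simp: Cn_def)
  qed
  show ?thesis using A B by simp
next
  case False
  then obtain t h b where th: "x = insm h t" "mk b n t h" using assms(1) by (auto simp: Cn_def)
  have pt: "isperm n t" "h < n" using mk_isperm[OF th(2)] by auto
  have mbx: "mb x = insm h (mb t)" using mb_insm[OF pt(1) _ pt(2)] assms(2) th by simp
  obtain b' where "mk b' n (mb t) h" using rest_mb[OF th(2)] by blast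
  then have B: "mb x \<in> Cn n" using mbx by (auto simp: Cn_def)
  have mtx: "mt x = insm (h + (if last t < h then 1 else 0)) (mt t)" using mt_insm[OF pt(1) _ pt(2)] assms(2) th by simp
  obtain b2 where nx: "NX b2 n t h" using rest_mt[OF th(2)] by blast
  have A: "mt x \<in> Cn n"
  proof -
    have n2: "n \<ge> 2" using assms(2) by simp
    show ?thesis using NX_cases[OF nx n2]
  proof
    assume "h + (if last t < h then 1 else 0) < n \<and> mk b2 n (mt t) (h + (if last t < h then 1 else 0))"
    then show ?thesis using mtx by (auto simp: Cn_def)
  next
    assume "h + (if last t < h then 1 else 0) = n \<and> mt t \<in> Wc n"
    then show ?thesis using mtx by (auto simp: Cn_def Cy_def)
  qed
  qed
  show ?thesis using A B by simp
qed


inductive pr :: "nat \<Rightarrow> nat list \<Rightarrow> bool" for j where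
  pr_sy: "pr j (symk j)"
| pr_mb: "pr j x \<Longrightarrow> pr j (mb x)"
| pr_mt: "pr j x \<Longrightarrow> last x \<noteq> 0 \<Longrightarrow> pr j (mt x)"

inductive qr :: "nat \<Rightarrow> nat list \<Rightarrow> bool" for j where
  qr_sy: "qr j (symk j)"
| qr_mt: "qr j x \<Longrightarrow> qr j (mt x)"
| qr_mb: "qr j x \<Longrightarrow> hd x \<noteq> j - 1 \<Longrightarrow> qr j (mb x)"

lemma pr_reach: "pr j x \<Longrightarrow> mstep\<^sup>*\<^sup>* (symk j) x"
  by (induction rule: pr.induct) (auto simp: mstep_def intro: rtranclp.rtrancl_into_rtrancl)

lemma qr_reach: "qr j x \<Longrightarrow> mstep\<^sup>*\<^sup>* (symk j) x"
  by (induction rule: qr.induct) (auto simp: mstep_def intro: rtranclp.rtrancl_into_rtrancl)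

lemma pr_perm: "pr j x \<Longrightarrow> j \<ge> 1 \<Longrightarrow> isperm j x"
  by (induction rule: pr.induct) (auto simp: isperm_symk isperm_mt isperm_mb)

lemma qr_perm: "qr j x \<Longrightarrow> j \<ge> 1 \<Longrightarrow> isperm j x"
  by (induction rule: qr.induct) (auto simp: isperm_symk isperm_mt isperm_mb)

lemma iter_mb: "j \<ge> 2 \<Longrightarrow> (mb ^^ a) (symk (j + a)) = EE a (symk j)"
proof (induction a arbitrary: j)
  case 0 then show ?case by (simp add: EE_0 symk_def)
next
  case (Suc a)
  have "(mb ^^ Suc a) (symk (j + Suc a)) = mb ((mb ^^ a) (symk ((j + 1) + a)))" by simp
  also have "\<dots> = mb (EE a (symk (j + 1)))" using Suc.IH[of "Suc j"] Suc.prems by simp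
  also have "\<dots> = EE (Suc a) (symk j)" using mb_EE_sym[of "j + 1" a] Suc by simp
  finally show ?case .
qed

lemma iter_mt: "j \<ge> 2 \<Longrightarrow> (mt ^^ a) (symk (j + a)) = FF a (symk j)"
proof (induction a arbitrary: j)
  case 0 then show ?case by simp
next
  case (Suc a)
  have "(mt ^^ Suc a) (symk (j + Suc a)) = mt ((mt ^^ a) (symk ((j + 1) + a)))" by simp
  also have "\<dots> = mt (FF a (symk (j + 1)))" using Suc.IH[of "Suc j"] Suc.prems by simp
  also have "\<dots> = FF (Suc a) (symk j)" using mt_FF_sym[of "j + 1" a] Suc by simp
  finally show ?case .
qed

lemma pr_iter_mb: "pr k ((mb ^^ a) (symk k))"
  by (induction a) (auto intro: pr.intros)

lemma qr_iter_mt: "qr k ((mt ^^ a) (symk k))"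
  by (induction a) (auto intro: qr.intros)

lemma lift_E: "qr j x \<Longrightarrow> j \<ge> 2 \<Longrightarrow> a \<ge> 1 \<Longrightarrow> pr (j + a) (EE a x)"
proof (induction rule: qr.induct)
  case qr_sy
  then show ?case using pr_iter_mb[of "j + a" a] iter_mb[of j a] by simp
next
  case (qr_mt x)
  have lx: "length x = j" using qr_perm[OF qr_mt(1)] qr_mt isperm_len by simp
  have "mt (EE a x) = EE a (mt x)" using mt_EE lx qr_mt by simp
  moreover have "last (EE a x) \<noteq> 0" using last_EE lx qr_mt by simp
  ultimately show ?case using pr_mt[OF qr_mt.IH[OF qr_mt.prems]] by simp
next
  case (qr_mb x)
  have lx: "length x = j" using qr_perm[OF qr_mb(1)] qr_mb isperm_len by simp
  have "mb (EE a x) = EE a (mb x)" using mb_EE lx qr_mb by simp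
  then show ?case using pr_mb[OF qr_mb.IH[OF qr_mb.prems]] by simp
qed

lemma lift_F: "pr j x \<Longrightarrow> j \<ge> 2 \<Longrightarrow> a \<ge> 1 \<Longrightarrow> qr (j + a) (FF a x)"
proof (induction rule: pr.induct)
  case pr_sy
  then show ?case using qr_iter_mt[of "j + a" a] iter_mt[of j a] by simp
next
  case (pr_mb x)
  have lx: "length x = j" using pr_perm[OF pr_mb(1)] pr_mb isperm_len by simp
  have "mb (FF a x) = FF a (mb x)" using mb_FF lx pr_mb by simp
  moreover have "hd (FF a x) \<noteq> j + a - 1" using hd_FF pr_mb by simp
  ultimately show ?case using qr_mb[OF pr_mb.IH[OF pr_mb.prems]] by simp
next
  case (pr_mt x)
  have lx: "length x = j" using pr_perm[OF pr_mt(1)] pr_mt isperm_len by simp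
  have "mt (FF a x) = FF a (mt x)" using mt_FF lx pr_mt by simp
  then show ?case using qr_mt[OF pr_mt.IH[OF pr_mt.prems]] by simp
qed

lemma inH_pq: "inH b k t \<Longrightarrow> (if b then pr k t else qr k t)"
proof (induction rule: inH.induct)
  case (sy k b) then show ?case by (simp add: pr_sy qr_sy)
next
  case (eP j s a) then show ?case using lift_E by simp
next
  case (fQ j s a) then show ?case using lift_F by simp
qed

lemma inH_reach: "inH b k t \<Longrightarrow> mstep\<^sup>*\<^sup>* (symk k) t"
  using inH_pq pr_reach qr_reach by (metis (full_types))


lemma u0_Wc: "n \<ge> 3 \<Longrightarrow> FF (n - 2) (symk 2) \<in> Wc n"
  unfolding Wc_def using ww_2 by (intro image_eqI[of _ _ "n - 2"]) auto

lemma last_u0: "last (FF a (symk 2)) = 0" by (simp add: FF_def symk_def gF_def numeral_2_eq_2)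

lemma LIFT:
  assumes "mk b n t h" "t' = mt t \<or> t' = mb t"
  shows "\<exists>b' h'. mk b' n t' h' \<and> mstep\<^sup>*\<^sup>* (insm h t) (insm h' t')"
proof -
  have pt: "isperm n t" "h < n" "n \<ge> 3" using mk_isperm[OF assms(1)] by auto
  from assms(2) show ?thesis
  proof
    assume t': "t' = mb t"
    have "mb (insm h t) = insm h (mb t)" using mb_insm[OF pt(1) _ pt(2)] pt by simp
    moreover obtain b' where "mk b' n (mb t) h" using rest_mb[OF assms(1)] by blast
    ultimately show ?thesis using t' by (metis mstep_def r_into_rtranclp)
  next
    assume t': "t' = mt t"
    define h' where "h' = h + (if last t < h then 1 else 0)"
    have mtx: "mt (insm h t) = insm h' (mt t)" using mt_insm[OF pt(1) _ pt(2)] pt h'_def by simp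
    obtain b2 where nx: "NX b2 n t h" using rest_mt[OF assms(1)] by blast
    have n2: "n \<ge> 2" using pt by simp
    from NX_cases[OF nx n2] show ?thesis
    proof
      assume "h + (if last t < h then 1 else 0) < n \<and> mk b2 n (mt t) (h + (if last t < h then 1 else 0))"
      then show ?thesis using mtx t' h'_def by (metis mstep_def r_into_rtranclp)
    next
      assume c: "h + (if last t < h then 1 else 0) = n \<and> mt t \<in> Wc n"
      then have mtx2: "mt (insm h t) = insm n (mt t)" using mtx h'_def by simp
      have pu: "isperm n (mt t)" using Wc_isperm c pt by blast
      obtain b' where mk': "mk b' n (mt t) (last (mt t) + 1)" using Wc_exit c pt by blast
      have "mt (insm n (mt t)) = insm (last (mt t) + 1) (mt t)" using mt_insm_top[OF pu] pt by simp
      then have "mstep\<^sup>*\<^sup>* (insm h t) (insm (last (mt t) + 1) (mt t))"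
        using mtx2 by (metis mstep_def r_into_rtranclp rtranclp.rtrancl_into_rtrancl)
      then show ?thesis using mk' t' by blast
    qed
  qed
qed

definition sig0 :: "nat \<Rightarrow> nat list" where "sig0 n = insm n (FF (n - 2) (symk 2))"

lemma reach_rest:
  assumes "mstep\<^sup>*\<^sup>* (FF (n - 2) (symk 2)) t" "n \<ge> 3"
  shows "\<exists>b h. mk b n t h \<and> mstep\<^sup>*\<^sup>* (sig0 n) (insm h t)"
  using assms(1)
proof (induction rule: rtranclp_induct)
  case base
  have "mk False ((n - 2) + 2) (FF (n - 2) (symk 2)) 1" using assms(2) by (intro mk.m_F2) auto
  moreover have "n - 2 + 2 = n" using assms(2) by arith
  ultimately have mk0: "mk False n (FF (n - 2) (symk 2)) 1" by simp
  have pu: "isperm n (FF (n - 2) (symk 2))" using Wc_isperm u0_Wc assms(2) by blast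
  have "mt (sig0 n) = insm 1 (FF (n - 2) (symk 2))"
    using mt_insm_top[OF pu] assms(2) last_u0 by (simp add: sig0_def)
  then have "mstep\<^sup>*\<^sup>* (sig0 n) (insm 1 (FF (n - 2) (symk 2)))" by (metis mstep_def r_into_rtranclp)
  then show ?case using mk0 by blast
next
  case (step y z)
  then obtain b h where bh: "mk b n y h" "mstep\<^sup>*\<^sup>* (sig0 n) (insm h y)" by blast
  have "z = mt y \<or> z = mb y" using step(2) by (simp add: mstep_def)
  then obtain b' h' where "mk b' n z h'" "mstep\<^sup>*\<^sup>* (insm h y) (insm h' z)" using LIFT[OF bh(1)] by blast
  then show ?case using bh(2) by (meson rtranclp_trans)
qed

lemma rest_reach:
  assumes "mk b n t h"
  shows "mstep\<^sup>*\<^sup>* (sig0 n) (insm h t)"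
proof -
  have n: "n \<ge> 3" and it: "inH b n t" using mk_basic[OF assms] by auto
  have e: "n - 2 + 2 = n" using n by arith
  have "mt (FF (n - 2) (symk 2)) = symk n" using mt_FF_sym[of 2 "n - 2"] e by simp
  then have "mstep (FF (n - 2) (symk 2)) (symk n)" by (simp add: mstep_def)
  then have "mstep\<^sup>*\<^sup>* (FF (n - 2) (symk 2)) t" using inH_reach[OF it] by (meson converse_rtranclp_into_rtranclp)
  then obtain b2 h2 where "mk b2 n t h2" "mstep\<^sup>*\<^sup>* (sig0 n) (insm h2 t)" using reach_rest n by blast
  moreover have "h = h2" using mk_fun assms \<open>mk b2 n t h2\<close> by blast
  ultimately show ?thesis by simp
qed

lemma cyc_reach:
  assumes "u \<in> Cy n" "n \<ge> 3"
  shows "mstep\<^sup>*\<^sup>* (sig0 n) (insm n u)"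
proof -
  have pu0: "isperm n (FF (n - 2) (symk 2))" using Wc_isperm u0_Wc assms(2) by blast
  have e: "n - 2 + 2 = n" using assms(2) by arith
  have "mb (sig0 n) = insm n (zz n)"
    using mb_insm_top[OF pu0] assms(2) rotr_FF_sym2[of "n - 2"] e by (simp add: sig0_def)
  then have z: "mstep\<^sup>*\<^sup>* (sig0 n) (insm n (zz n))" by (metis mstep_def r_into_rtranclp)
  have "mb (insm n (zz n)) = insm n (ww n)"
    using mb_insm_top[OF isperm_zz] assms(2) rotr_zz by simp
  then have w: "mstep\<^sup>*\<^sup>* (sig0 n) (insm n (ww n))" using z by (metis mstep_def rtranclp.rtrancl_into_rtrancl)
  have W: "i \<le> n - 2 \<Longrightarrow> mstep\<^sup>*\<^sup>* (sig0 n) (insm n (FF i (ww (n - i))))" for i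
  proof (induction i)
    case 0 then show ?case using w by simp
  next
    case (Suc i)
    then have IH: "mstep\<^sup>*\<^sup>* (sig0 n) (insm n (FF i (ww (n - i))))" by simp
    have "FF i (ww (n - i)) \<in> Wc n" unfolding Wc_def using Suc by (intro image_eqI[of _ _ i]) auto
    then have pu: "isperm n (FF i (ww (n - i)))" using Wc_isperm assms(2) by blast
    have "mb (insm n (FF i (ww (n - i)))) = insm n (FF (Suc i) (ww (n - Suc i)))"
      using mb_insm_top[OF pu] assms(2) rotr_FF_ww[of "n - i" i] Suc by simp
    then show ?case using IH by (metis mstep_def rtranclp.rtrancl_into_rtrancl)
  qed
  show ?thesis
  proof (cases "u = zz n")
    case True then show ?thesis using z by simp
  next
    case False
    then obtain i where "i \<le> n - 2" "u = FF i (ww (n - i))" using assms(1) by (auto simp: Cy_def Wc_def)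
    then show ?thesis using W by simp
  qed
qed

lemma reach_eq:
  assumes "n \<ge> 3"
  shows "{\<tau>. mstep\<^sup>*\<^sup>* (sig0 n) \<tau>} = Cn n"
proof (intro set_eqI iffI)
  fix x assume "x \<in> {\<tau>. mstep\<^sup>*\<^sup>* (sig0 n) \<tau>}"
  then have "mstep\<^sup>*\<^sup>* (sig0 n) x" by simp
  then show "x \<in> Cn n"
  proof (induction rule: rtranclp_induct)
    case base
    have "FF (n - 2) (symk 2) \<in> Cy n" using u0_Wc assms by (simp add: Cy_def)
    then show ?case by (simp add: sig0_def Cn_def)
  next
    case (step y z) then show ?case using Cn_closed[OF _ assms] by (auto simp: mstep_def)
  qed
next
  fix x assume "x \<in> Cn n"
  then show "x \<in> {\<tau>. mstep\<^sup>*\<^sup>* (sig0 n) \<tau>}"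
    using rest_reach cyc_reach assms by (auto simp: Cn_def)
qed

lemma hd_Wc: "n \<ge> 3 \<Longrightarrow> i \<le> n - 2 \<Longrightarrow> hd (FF i (ww (n - i))) = (if i = 0 then n - 1 else i)"
  by (auto simp: hd_FF hd_ww)

lemma card_Cy: assumes "n \<ge> 3" shows "card (Cy n) = n"
proof -
  have inj: "inj_on (\<lambda>i. FF i (ww (n - i))) {0..n-2}"
  proof (rule inj_onI)
    fix i j assume ij: "i \<in> {0..n-2}" "j \<in> {0..n-2}" "FF i (ww (n - i)) = FF j (ww (n - j))"
    then have "(if i = 0 then n - 1 else i) = (if j = 0 then n - 1 else j)"
      using hd_Wc[OF assms] by (metis atLeastAtMost_iff)
    then show "i = j" using ij assms by (auto split: if_splits)
  qed
  have cW: "card (Wc n) = n - 1" unfolding Wc_def using card_image[OF inj] assms by simp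
  have "zz n \<notin> Wc n"
  proof
    assume "zz n \<in> Wc n"
    then obtain i where i: "i \<le> n - 2" "zz n = FF i (ww (n - i))" by (auto simp: Wc_def)
    then have "0 = (if i = 0 then n - 1 else i)" using hd_Wc[OF assms] hd_zz by metis
    then show False using assms by (auto split: if_splits)
  qed
  moreover have "finite (Wc n)" by (simp add: Wc_def)
  ultimately show ?thesis using cW assms by (simp add: Cy_def)
qed

lemma card_Cn: assumes "n \<ge> 3" shows "card (Cn n) = 2 ^ (n - 1) - 1 + n"
proof -
  define M where "M = {(t, h). \<exists>b. mk b n t h}"
  have A: "{insm h t | t h. \<exists>b. mk b n t h} = (\<lambda>(t, h). insm h t) ` M" by (auto simp: M_def)
  have injA: "inj_on (\<lambda>(t, h). insm h t) M" by (auto simp: inj_on_def dest: insm_inj)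
  have fstM: "fst ` M = Pset n \<union> Qset n"
  proof
    show "fst ` M \<subseteq> Pset n \<union> Qset n"
    proof
      fix t assume "t \<in> fst ` M"
      then obtain h b where "mk b n t h" by (auto simp: M_def)
      then have ih: "inH b n t" using mk_basic by blast
      show "t \<in> Pset n \<union> Qset n"
      proof (cases b)
        case True then show ?thesis using ih by (simp add: Pset_def)
      next
        case False then show ?thesis using ih by (simp add: Qset_def)
      qed
    qed
    show "Pset n \<union> Qset n \<subseteq> fst ` M"
    proof
      fix t assume "t \<in> Pset n \<union> Qset n"
      then obtain b where "inH b n t" by (auto simp: Pset_def Qset_def)
      then obtain h where "mk b n t h" using mk_total assms by blast
      then show "t \<in> fst ` M" by (force simp: M_def)
    qed
  qed
  have injfst: "inj_on fst M" using mk_fun by (auto simp: inj_on_def M_def)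
  have cardM: "card M = 2 ^ (n - 1) - 1"
    using card_image[OF injfst] fstM card_H[of n] assms by simp
  have finM: "finite M"
  proof -
    have "M \<subseteq> (Pset n \<union> Qset n) \<times> {0..<n}" using fstM mk_isperm by (force simp: M_def)
    moreover have "finite (Pset n \<union> Qset n)" using card_PQ[of n] assms by simp
    ultimately show ?thesis by (meson finite_SigmaI finite_atLeastLessThan finite_subset)
  qed
  have cA: "card ((\<lambda>(t, h). insm h t) ` M) = 2 ^ (n - 1) - 1" using card_image[OF injA] cardM by simp
  have cB: "card (insm n ` Cy n) = n"
    using card_image[of "insm n" "Cy n"] card_Cy[OF assms] insm_inj by (auto simp: inj_on_def)
  have disj: "(\<lambda>(t, h). insm h t) ` M \<inter> insm n ` Cy n = {}"
  proof -
    have "h \<noteq> n" if "(t, h) \<in> M" for t h using that mk_isperm by (auto simp: M_def)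
    then show ?thesis using insm_inj by fastforce
  qed
  have finB: "finite (insm n ` Cy n)" by (simp add: Cy_def Wc_def)
  have "card (Cn n) = card ((\<lambda>(t, h). insm h t) ` M) + card (insm n ` Cy n)"
    unfolding Cn_def A using card_Un_disjoint[OF finite_imageI[OF finM] finB disj] by simp
  then show ?thesis using cA cB by simp
qed


lemma pi_lperm: assumes "n \<ge> 3" shows "is_lperm {0..n} (pi_n n) \<and> fst (pi_n n) \<noteq> []"
proof -
  have s1: "set (0 # [2..<n] @ [1, n]) = {0..n}" using assms by auto
  have d1: "distinct (0 # [2..<n] @ [1, n])" using assms by auto
  have s2: "set (rev [0..<n+1]) = {0..n}" by auto
  have d2: "distinct (rev [0..<n+1])" by simp
  show ?thesis using s1 s2 d1 d2 by (simp add: is_lperm_def pi_n_def)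
qed

lemma pos_rev_upt: "a \<le> n \<Longrightarrow> pos a (rev [0..<Suc n]) = n - a"
proof -
  assume a: "a \<le> n"
  have "rev [0..<n+1] ! (n - a) = a" using a by (simp add: rev_nth del: upt_Suc)
  moreover have "n - a < length (rev [0..<n+1])" by simp
  moreover have "distinct (rev [0..<n+1])" by (simp del: upt_Suc)
  ultimately show ?thesis using pos_nth[of "rev [0..<n+1]" "n - a"] by (simp del: upt_Suc)
qed

lemma map_minus_upt: "map (\<lambda>a. n - a) [2..<n] = rev [1..<n-1]"
proof (rule nth_equalityI)
  show "length (map (\<lambda>a. n - a) [2..<n]) = length (rev [1..<n-1])" by simp
next
  fix i assume "i < length (map (\<lambda>a. n - a) [2..<n])"
  then have i: "i < n - 2" by simp
  then show "map (\<lambda>a. n - a) [2..<n] ! i = rev [1..<n-1] ! i" by (simp add: rev_nth)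
qed

lemma red_pi: assumes "n \<ge> 3" shows "reduced (pi_n n) = sig0 n"
proof -
  have r: "reduced (pi_n n) = map (\<lambda>a. pos a (rev [0..<n+1])) (0 # [2..<n] @ [1, n])"
    by (simp add: reduced_def pi_n_def del: upt_Suc)
  have "reduced (pi_n n) = map (\<lambda>a. n - a) (0 # [2..<n] @ [1, n])"
    unfolding r using assms by (intro map_cong) (auto simp: pos_rev_upt simp del: upt_Suc)
  also have "\<dots> = n # rev [1..<n-1] @ [n - 1, 0]" using map_minus_upt by simp
  also have "\<dots> = sig0 n"
  proof -
    have pu: "isperm n (FF (n - 2) (symk 2))" using Wc_isperm u0_Wc assms by blast
    have e: "n - 2 + 1 = n - 1" using assms by arith
    have "FF (n - 2) (symk 2) = rev [1..<n-1] @ [n - 1, 0]"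
      using e assms by (simp add: FF_alt symk_def gF_def numeral_2_eq_2)
    then show ?thesis using insm_top[OF pu] by (simp add: sig0_def)
  qed
  finally show ?thesis .
qed

theorem corollary3p2:
  fixes n :: nat
  assumes "n \<ge> 3"
  shows "card (reduced_rauzy_vertices (pi_n n)) = 2 ^ (n - 1) - 1 + n"
proof -
  have l: "is_lperm {0..n} (pi_n n)" "fst (pi_n n) \<noteq> []" using pi_lperm[OF assms] by auto
  have "reduced_rauzy_vertices (pi_n n) = {\<tau>. mstep\<^sup>*\<^sup>* (sig0 n) \<tau>}"
    using vertices_eq[OF l] red_pi[OF assms] by simp
  also have "\<dots> = Cn n" using reach_eq[OF assms] .
  finally show ?thesis using card_Cn[OF assms] by simp
qed


end
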